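(* Assume $A_n$ satisfies (C1), the mean field condition $\lim_{n\to\infty}\frac1n\sum_{i,j=1}^nA_n(i,j)^2=0$, and the irregularity condition $$\liminf_{n\to\infty}\frac1n\sum_{i=1}^n\big(\mathcal R_n(i)-\overline{\mathcal R}_n\big)^2>0.$$ Then for every $(\beta,B)\in\Theta$, under $\mathbb P_{n,\beta,B}$ we have $T_n(\mathbf X)=\Theta_p(1)$. Consequently, with probability tending to one the pseudo-likelihood estimator exists and $(\hat\beta_n-\beta)^2+(\hat B_n-B)^2=O_p(1/n)$.
   Context: For each $n$, $A_n$ is a known symmetric $n\times n$ matrix with non-negative entries and zero diagonal. The Ising model is $\mathbb P_{n,\beta,B}(\mathbf X=\mathbf x)=Z_n(\beta,B)^{-1}\exp(\frac{\beta}{2}\mathbf x^\top A_n\mathbf x+B\sum_i x_i)$ on $\{-1,1\}^n$. (C1): there is a constant $\gamma<\infty$ with $\max_{i}\sum_{j}A_n(i,j)\le\gamma$ for all $n$. $\Theta=\{(\beta,B):\beta>0,B\ne0\}$. $\mathcal R_n(i)=\sum_{j=1}^nA_n(i,j)$ (row sums), $\overline{\mathcal R}_n=\frac1n\sum_i\mathcal R_n(i)$. $m_i(\mathbf x)=\sum_jA_n(i,j)x_j$, $\bar m(\mathbf x)=\frac1n\sum_i m_i(\mathbf x)$, $T_n(\mathbf x)=\frac1n\sum_i(m_i(\mathbf x)-\bar m(\mathbf x))^2$. The pseudo-likelihood estimator $(\hat\beta_n,\hat B_n)$ is the unique root in $\mathbb R^2$ of $\sum_i m_i(\mathbf x)(x_i-\tanh(\beta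 m_i(\mathbf x)+B))=0$, $\sum_i(x_i-\tanh(\beta m_i(\mathbf x)+B))=0$, when it exists. $U_n=O_p(V_n)$ means $U_n/V_n$ is tight; $U_n=\Theta_p(V_n)$ means $U_n=O_p(V_n)$ and $V_n=O_p(U_n)$. *)

theory Defs
  imports Complex_Main "HOL-Library.Extended_Real" "HOL-Library.Liminf_Limsup"
begin

text \<open>A sequence of matrices: A n i j is the (i,j) entry of A_n, for i, j < n
  (indices 0..n-1). Configurations in {-1,1}^n are functions nat => real that are
  +-1 on {0..<n} and 0 elsewhere.\<close>

type_synonym matseq = "nat \<Rightarrow> nat \<Rightarrow> nat \<Rightarrow> real"

definition configs :: "nat \<Rightarrow> (nat \<Rightarrow> real) set" where
  "configs n = {x. (\<forall>i<n. x i = 1 \<or> x i = -1) \<and> (\<forall>i\<ge>n. x i = 0)}"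

definition ising_weight :: "matseq \<Rightarrow> nat \<Rightarrow> real \<Rightarrow> real \<Rightarrow> (nat \<Rightarrow> real) \<Rightarrow> real" where
  "ising_weight A n \<beta> B x =
     exp (\<beta> / 2 * (\<Sum>i<n. \<Sum>j<n. x i * A n i j * x j) + B * (\<Sum>i<n. x i))"

definition ising_Z :: "matseq \<Rightarrow> nat \<Rightarrow> real \<Rightarrow> real \<Rightarrow> real" where
  "ising_Z A n \<beta> B = (\<Sum>x\<in>configs n. ising_weight A n \<beta> B x)"

definition ising_prob :: "matseq \<Rightarrow> nat \<Rightarrow> real \<Rightarrow> real \<Rightarrow> (nat \<Rightarrow> real) set \<Rightarrow> real" where
  "ising_prob A n \<beta> B E =
     (\<Sum>x\<in>configs n \<inter> E. ising_weight A n \<beta> B x) / ising_Z A n \<beta> B"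

definition row_sum :: "matseq \<Rightarrow> nat \<Rightarrow> nat \<Rightarrow> real" where
  "row_sum A n i = (\<Sum>j<n. A n i j)"

definition row_sum_mean :: "matseq \<Rightarrow> nat \<Rightarrow> real" where
  "row_sum_mean A n = (\<Sum>i<n. row_sum A n i) / real n"

definition loc_field :: "matseq \<Rightarrow> nat \<Rightarrow> (nat \<Rightarrow> real) \<Rightarrow> nat \<Rightarrow> real" where
  "loc_field A n x i = (\<Sum>j<n. A n i j * x j)"

definition loc_field_mean :: "matseq \<Rightarrow> nat \<Rightarrow> (nat \<Rightarrow> real) \<Rightarrow> real" where
  "loc_field_mean A n x = (\<Sum>i<n. loc_field A n x i) / real n"

definition T_stat :: "matseq \<Rightarrow> nat \<Rightarrow> (nat \<Rightarrow> real) \<Rightarrow> real" where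
  "T_stat A n x = (\<Sum>i<n. (loc_field A n x i - loc_field_mean A n x)^2) / real n"

definition Op :: "matseq \<Rightarrow> real \<Rightarrow> real \<Rightarrow> (nat \<Rightarrow> (nat \<Rightarrow> real) \<Rightarrow> real)
                    \<Rightarrow> (nat \<Rightarrow> (nat \<Rightarrow> real) \<Rightarrow> real) \<Rightarrow> bool" where
  "Op A \<beta> B U V \<longleftrightarrow> (\<forall>\<epsilon>>0. \<exists>M. eventually (\<lambda>n.
      ising_prob A n \<beta> B {x. \<bar>U n x\<bar> > M * \<bar>V n x\<bar>} \<le> \<epsilon>) sequentially)"

definition Thetap :: "matseq \<Rightarrow> real \<Rightarrow> real \<Rightarrow> (nat \<Rightarrow> (nat \<Rightarrow> real) \<Rightarrow> real)
                    \<Rightarrow> (nat \<Rightarrow> (nat \<Rightarrow> real) \<Rightarrow> real) \<Rightarrow> bool" where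
  "Thetap A \<beta> B U V \<longleftrightarrow> Op A \<beta> B U V \<and> Op A \<beta> B V U"

definition pl_root :: "matseq \<Rightarrow> nat \<Rightarrow> (nat \<Rightarrow> real) \<Rightarrow> real \<times> real \<Rightarrow> bool" where
  "pl_root A n x p \<longleftrightarrow>
     (\<Sum>i<n. loc_field A n x i * (x i - tanh (fst p * loc_field A n x i + snd p))) = 0 \<and>
     (\<Sum>i<n. x i - tanh (fst p * loc_field A n x i + snd p)) = 0"

definition ple_exists :: "matseq \<Rightarrow> nat \<Rightarrow> (nat \<Rightarrow> real) \<Rightarrow> bool" where
  "ple_exists A n x \<longleftrightarrow> (\<exists>!p. pl_root A n x p)"

definition ple :: "matseq \<Rightarrow> nat \<Rightarrow> (nat \<Rightarrow> real) \<Rightarrow> real \<times> real" where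
  "ple A n x = (THE p. pl_root A n x p)"

end

theory Submission
  imports Defs "HOL-Analysis.Analysis"
begin



lemma tanh_mvt:
  fixes a b :: real
  assumes "a < b"
  shows "\<exists>z. a < z \<and> z < b \<and> tanh b - tanh a = (b - a) * (1 - tanh z ^ 2)"
  using assms by (intro MVT2) (auto intro!: derivative_eq_intros simp: cosh_real_pos[THEN less_imp_neq, symmetric])

lemma tanh_lip: "\<bar>tanh a - tanh b\<bar> \<le> \<bar>a - (b::real)\<bar>"
proof -
  have *: "\<bar>tanh b - tanh a\<bar> \<le> \<bar>b - a\<bar>" if ab: "a < b" for a b :: real
  proof -
    obtain z where "tanh b - tanh a = (b - a) * (1 - tanh z ^ 2)" using tanh_mvt[OF ab] by blast
    moreover have "0 \<le> 1 - tanh z ^ 2" "1 - tanh z ^ 2 \<le> 1"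
    proof -
      have "\<bar>tanh z\<bar> \<le> 1" using tanh_real_bounds[of z] by auto
      then have "tanh z ^ 2 \<le> 1" by (simp add: abs_square_le_1)
      then show "0 \<le> 1 - tanh z ^ 2" "1 - tanh z ^ 2 \<le> 1" by auto
    qed
    ultimately show ?thesis using ab by (simp add: abs_mult mult_left_le)
  qed
  show ?thesis
    by (cases a b rule: linorder_cases) (use *[of a b] *[of b a] in \<open>auto simp: abs_minus_commute\<close>)
qed

lemma tanh_prod_nonneg: "0 \<le> (tanh a - tanh b) * (a - (b::real))"
  by (cases a b rule: linorder_cases) (auto intro!: mult_nonneg_nonneg mult_nonpos_nonpos)

lemma tanh_prod_pos: "a \<noteq> b \<Longrightarrow> 0 < (tanh a - tanh b) * (a - (b::real))"
  by (cases a b rule: linorder_cases) (auto intro!: mult_pos_pos mult_neg_neg)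

lemma tanh_sq_le: "\<bar>z::real\<bar> \<le> M \<Longrightarrow> tanh z ^ 2 \<le> tanh M ^ 2"
proof -
  assume "\<bar>z\<bar> \<le> M"
  then have "\<bar>tanh z\<bar> \<le> tanh M" using tanh_real_le_iff[of "\<bar>z\<bar>" M] by simp
  then have "\<bar>tanh z\<bar> ^ 2 \<le> tanh M ^ 2" by (intro power_mono) auto
  then show ?thesis by simp
qed

lemma tanh_strong:
  fixes a b M :: real
  assumes "\<bar>a\<bar> \<le> M" "\<bar>b\<bar> \<le> M"
  shows "(1 - tanh M ^ 2) * (a - b) ^ 2 \<le> (tanh a - tanh b) * (a - b)"
proof -
  have *: "(1 - tanh M ^ 2) * (b - a) ^ 2 \<le> (tanh b - tanh a) * (b - a)"
    if ab: "a < b" and ha: "\<bar>a\<bar> \<le> M" and hb: "\<bar>b\<bar> \<le> M" for a b :: real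
  proof -
    obtain z where z: "a < z" "z < b" "tanh b - tanh a = (b - a) * (1 - tanh z ^ 2)"
      using tanh_mvt[OF ab] by blast
    have "\<bar>z\<bar> \<le> M" using z ha hb by auto
    then have "1 - tanh M ^ 2 \<le> 1 - tanh z ^ 2" using tanh_sq_le by auto
    then have "(1 - tanh M ^ 2) * (b - a) ^ 2 \<le> (1 - tanh z ^ 2) * (b - a) ^ 2"
      by (intro mult_right_mono) auto
    moreover have "(tanh b - tanh a) * (b - a) = (1 - tanh z ^ 2) * (b - a) ^ 2"
      using z(3) by (simp add: power2_eq_square)
    ultimately show ?thesis by simp
  qed
  show ?thesis
  proof (cases a b rule: linorder_cases)
    case less
    have e: "(b - a) ^ 2 = (a - b) ^ 2" "(tanh b - tanh a) * (b - a) = (tanh a - tanh b) * (a - b)"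
      by (simp_all add: power2_commute algebra_simps)
    show ?thesis using *[of a b] assms less unfolding e by simp
  next
    case greater then show ?thesis using *[of b a] assms by simp
  qed simp
qed

lemma DERIV_lncosh: "((\<lambda>s. ln (cosh (z + s * w))) has_real_derivative (tanh (z+s*w) * w)) (at (s::real))"
proof -
  have c: "0 < cosh (z + s * w)" by (rule cosh_real_pos)
  have g: "DERIV (\<lambda>s. z + s*w) s :> w" by (auto intro!: derivative_eq_intros)
  have h: "DERIV (\<lambda>s. cosh (z + s*w)) s :> sinh(z+s*w) * w" using has_field_derivative_cosh[OF g] .
  show ?thesis using DERIV_chain2[OF DERIV_ln_divide[OF c] h] by (simp add: tanh_def)
qed

lemma lncosh_strong:
  fixes z w M :: real
  assumes "\<bar>z\<bar> \<le> M" "\<bar>z + w\<bar> \<le> M"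
  shows "tanh z * w + (1 - tanh M ^ 2) / 2 * w ^ 2 \<le> ln (cosh (z + w)) - ln (cosh z)"
proof -
  define c where "c = 1 - tanh M ^ 2"
  define \<psi> where "\<psi> s = ln (cosh (z + s * w)) - ln (cosh z) - s * w * tanh z - c / 2 * s ^ 2 * w ^ 2" for s
  have der: "DERIV \<psi> s :> (tanh (z + s * w) * w - w * tanh z - c * s * w ^ 2)" for s
  proof -
    have p: "DERIV (\<lambda>s. ln (cosh z) + s * (w * tanh z) + s ^ 2 * (c / 2 * w ^ 2)) s :> (w * tanh z + 2 * s * (c / 2 * w ^ 2))"
      by (auto intro!: derivative_eq_intros)
    have e: "\<psi> = (\<lambda>s. ln (cosh (z + s * w)) - (ln (cosh z) + s * (w * tanh z) + s ^ 2 * (c / 2 * w ^ 2)))"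
      unfolding \<psi>_def by (auto simp: algebra_simps)
    show ?thesis unfolding e using DERIV_diff[OF DERIV_lncosh[of z w s] p] by (simp add: algebra_simps)
  qed
  have "\<psi> 0 \<le> \<psi> 1"
  proof (rule DERIV_nonneg_imp_nondecreasing[of 0 1])
    fix s :: real assume s: "0 \<le> s" "s \<le> 1"
    have zs: "\<bar>z + s * w\<bar> \<le> M"
    proof -
      have "z + s * w = (1 - s) * z + s * (z + w)" by (simp add: algebra_simps)
      also have "\<bar>\<dots>\<bar> \<le> (1 - s) * \<bar>z\<bar> + s * \<bar>z + w\<bar>"
        using abs_triangle_ineq[of "(1-s)*z" "s*(z+w)"] s by (simp add: abs_mult)
      also have "\<dots> \<le> (1 - s) * M + s * M"
        using s assms by (intro add_mono mult_left_mono) auto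
      finally show ?thesis by (simp add: algebra_simps)
    qed
    have "0 \<le> tanh (z + s * w) * w - w * tanh z - c * s * w ^ 2"
    proof (cases "s = 0")
      case True then show ?thesis by simp
    next
      case False
      then have sp: "s > 0" using s by simp
      have "c * (s * w) ^ 2 \<le> (tanh (z + s * w) - tanh z) * (s * w)"
        using tanh_strong[OF zs assms(1)] unfolding c_def by simp
      then have "s * (c * s * w ^ 2) \<le> s * ((tanh (z + s * w) - tanh z) * w)"
        by (simp add: power2_eq_square algebra_simps)
      then have "c * s * w ^ 2 \<le> (tanh (z + s * w) - tanh z) * w"
        using sp by simp
      then show ?thesis by (simp add: algebra_simps)
    qed
    then show "\<exists>y. DERIV \<psi> s :> y \<and> 0 \<le> y" using der by blast
  qed simp
  then have "0 \<le> ln (cosh (z + w)) - ln (cosh z) - tanh z * w - c / 2 * w ^ 2"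
    unfolding \<psi>_def by (simp add: algebra_simps)
  then show ?thesis unfolding c_def by linarith
qed



lemma finite_configs: "finite (configs n)"
proof -
  let ?f = "\<lambda>S i. if i < n then (if i \<in> S then 1 else -1) else (0::real)"
  have "configs n \<subseteq> ?f ` Pow {..<n}"
  proof
    fix x assume x: "x \<in> configs n"
    have "x = ?f {i. i < n \<and> x i = 1}"
    proof
      fix i show "x i = ?f {i. i < n \<and> x i = 1} i"
        using x unfolding configs_def by (cases "i < n") auto
    qed
    then show "x \<in> ?f ` Pow {..<n}" by blast
  qed
  then show ?thesis by (rule finite_subset) auto
qed

lemma configs_ne: "(\<lambda>i. if i < n then 1 else 0) \<in> configs n"
  unfolding configs_def by auto

lemma weight_pos: "ising_weight A n \<beta> B x > 0"
  unfolding ising_weight_def by simp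

lemma Z_pos: "ising_Z A n \<beta> B > 0"
  unfolding ising_Z_def using finite_configs configs_ne
  by (intro sum_pos) (auto simp: weight_pos)

definition EE :: "matseq \<Rightarrow> nat \<Rightarrow> real \<Rightarrow> real \<Rightarrow> ((nat \<Rightarrow> real) \<Rightarrow> real) \<Rightarrow> real" where
  "EE A n \<beta> B g = (\<Sum>x\<in>configs n. ising_weight A n \<beta> B x * g x) / ising_Z A n \<beta> B"

lemma prob_nonneg: "ising_prob A n \<beta> B E \<ge> 0"
  unfolding ising_prob_def using Z_pos weight_pos
  by (intro divide_nonneg_pos sum_nonneg) (auto intro: less_imp_le)

lemma prob_mono: "configs n \<inter> E \<subseteq> F \<Longrightarrow> ising_prob A n \<beta> B E \<le> ising_prob A n \<beta> B F"
  unfolding ising_prob_def using Z_pos[of A n \<beta> B]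
  by (intro divide_right_mono sum_mono2) (auto simp: finite_configs weight_pos less_imp_le)

lemma prob_le1: "ising_prob A n \<beta> B E \<le> 1"
proof -
  have "ising_prob A n \<beta> B E \<le> ising_prob A n \<beta> B UNIV" by (rule prob_mono) auto
  also have "\<dots> = 1" unfolding ising_prob_def ising_Z_def using Z_pos[of A n \<beta> B]
    by (simp add: ising_Z_def)
  finally show ?thesis .
qed

lemma prob_compl: "ising_prob A n \<beta> B E + ising_prob A n \<beta> B (-E) = 1"
proof -
  have "(\<Sum>x\<in>configs n \<inter> E. ising_weight A n \<beta> B x) + (\<Sum>x\<in>configs n \<inter> -E. ising_weight A n \<beta> B x)
        = ising_Z A n \<beta> B"
    unfolding ising_Z_def by (subst sum.union_disjoint[symmetric]) (auto simp: finite_configs intro: sum.cong)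
  then show ?thesis unfolding ising_prob_def using Z_pos[of A n \<beta> B]
    by (simp add: add_divide_distrib[symmetric])
qed

lemma prob_union: "ising_prob A n \<beta> B (E \<union> F) \<le> ising_prob A n \<beta> B E + ising_prob A n \<beta> B F"
proof -
  have "(\<Sum>x\<in>configs n \<inter> (E \<union> F). ising_weight A n \<beta> B x) \<le>
        (\<Sum>x\<in>configs n \<inter> E. ising_weight A n \<beta> B x) + (\<Sum>x\<in>configs n \<inter> F. ising_weight A n \<beta> B x)"
  proof -
    have "configs n \<inter> (E \<union> F) = (configs n \<inter> E) \<union> (configs n \<inter> F)" by auto
    moreover have "0 \<le> sum (ising_weight A n \<beta> B) (configs n \<inter> E \<inter> (configs n \<inter> F))"
      by (intro sum_nonneg less_imp_le weight_pos)
    ultimately show ?thesis using sum_Un[of "configs n \<inter> E" "configs n \<inter> F" "ising_weight A n \<beta> B"]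
      finite_configs[of n] by auto
  qed
  then show ?thesis unfolding ising_prob_def using Z_pos[of A n \<beta> B]
    by (simp add: add_divide_distrib[symmetric] divide_right_mono)
qed

lemma EE_sum: "EE A n \<beta> B (\<lambda>x. \<Sum>j\<in>J. g j x) = (\<Sum>j\<in>J. EE A n \<beta> B (g j))"
proof -
  have "(\<Sum>x\<in>configs n. ising_weight A n \<beta> B x * (\<Sum>j\<in>J. g j x)) =
        (\<Sum>j\<in>J. \<Sum>x\<in>configs n. ising_weight A n \<beta> B x * g j x)"
    by (simp add: sum_distrib_left) (rule sum.swap)
  then show ?thesis unfolding EE_def by (simp add: sum_divide_distrib)
qed

lemma EE_cmult: "EE A n \<beta> B (\<lambda>x. c * g x) = c * EE A n \<beta> B g"
  unfolding EE_def by (simp add: sum_distrib_left algebra_simps)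

lemma EE_mono: "(\<And>x. x \<in> configs n \<Longrightarrow> g x \<le> h x) \<Longrightarrow> EE A n \<beta> B g \<le> EE A n \<beta> B h"
  unfolding EE_def using Z_pos[of A n \<beta> B]
  by (intro divide_right_mono sum_mono mult_left_mono) (auto simp: weight_pos less_imp_le)

lemma EE_const: "EE A n \<beta> B (\<lambda>x. c) = c"
  unfolding EE_def using Z_pos[of A n \<beta> B] by (simp add: ising_Z_def sum_distrib_right[symmetric])

lemma EE_cong: "(\<And>x. x \<in> configs n \<Longrightarrow> g x = h x) \<Longrightarrow> EE A n \<beta> B g = EE A n \<beta> B h"
  unfolding EE_def by (auto intro!: sum.cong)

lemma markov:
  assumes "\<And>x. x \<in> configs n \<Longrightarrow> 0 \<le> g x" "a > 0"
  shows "ising_prob A n \<beta> B {x. a \<le> g x} \<le> EE A n \<beta> B g / a"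
proof -
  have "(\<Sum>x\<in>configs n \<inter> {x. a \<le> g x}. ising_weight A n \<beta> B x) \<le>
        (\<Sum>x\<in>configs n \<inter> {x. a \<le> g x}. ising_weight A n \<beta> B x * (g x / a))"
    using assms weight_pos[of A n \<beta> B] by (intro sum_mono) (auto simp: field_simps)
  also have "\<dots> \<le> (\<Sum>x\<in>configs n. ising_weight A n \<beta> B x * (g x / a))"
    using assms weight_pos[of A n \<beta> B] finite_configs[of n]
    by (intro sum_mono2) (auto intro!: mult_nonneg_nonneg divide_nonneg_pos less_imp_le[OF weight_pos])
  finally show ?thesis unfolding ising_prob_def EE_def using Z_pos[of A n \<beta> B]
    by (simp add: divide_right_mono sum_divide_distrib[symmetric] sum_distrib_left[symmetric] field_simps)
qed



lemma sum_if_const: "(\<Sum>k\<in>K. if P then f k else 0) = (if P then (\<Sum>k\<in>K. f k) else (0::real))"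
  by auto

lemma quad_upd:
  fixes x :: "nat \<Rightarrow> real" and M :: "nat \<Rightarrow> nat \<Rightarrow> real"
  assumes i: "i < n"
  shows "(\<Sum>j<n. \<Sum>k<n. (x(i:=v)) j * M j k * (x(i:=v)) k) =
         (\<Sum>j<n. \<Sum>k<n. x j * M j k * x k) + (v - x i) * (\<Sum>k<n. M i k * x k)
         + (v - x i) * (\<Sum>j<n. x j * M j i) + (v - x i)^2 * M i i"
proof -
  define d where "d = v - x i"
  have u: "(x(i:=v)) j = x j + (if j = i then d else 0)" for j by (simp add: d_def)
  have "(\<Sum>j<n. \<Sum>k<n. (x(i:=v)) j * M j k * (x(i:=v)) k) =
        (\<Sum>j<n. \<Sum>k<n. x j * M j k * x k + x j * M j k * (if k = i then d else 0)
            + (if j = i then d else 0) * M j k * x k + (if j = i then d else 0) * M j k * (if k = i then d else 0))"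
    unfolding u by (intro sum.cong refl) (simp add: algebra_simps)
  also have "\<dots> = (\<Sum>j<n. \<Sum>k<n. x j * M j k * x k) + (\<Sum>j<n. x j * M j i * d)
        + (\<Sum>k<n. d * M i k * x k) + d * M i i * d"
    using i by (simp add: sum_if_const sum.distrib if_distrib[where f="\<lambda>t. _ * t"] if_distrib[where f="\<lambda>t. t * _"] cong: if_cong)
  finally show ?thesis by (simp add: d_def sum_distrib_left sum_distrib_right power2_eq_square algebra_simps)
qed



lemma tanh_flip_id1: "(1 - tanh u) + exp (-2*u) * (-1 - tanh u) = (0::real)"
proof -
  have p: "1 + exp (-2*u) > 0" using exp_gt_zero[of "-2*u"] by linarith
  show ?thesis unfolding tanh_real_altdef using p
    by (simp add: field_simps)
qed

lemma tanh_flip_id: "a = 1 \<or> a = -1 \<Longrightarrow> (a - tanh u) + exp (- (2*a*u)) * (-a - tanh u) = (0::real)"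
proof (elim disjE)
  assume "a = 1" then show ?thesis using tanh_flip_id1[of u] by simp
next
  assume "a = -1" then show ?thesis using tanh_flip_id1[of "-u"] by (simp add: algebra_simps)
qed




definition flip :: "nat \<Rightarrow> (nat \<Rightarrow> real) \<Rightarrow> (nat \<Rightarrow> real)" where
  "flip i x = x(i := - x i)"

lemma flip_configs: "i < n \<Longrightarrow> x \<in> configs n \<Longrightarrow> flip i x \<in> configs n"
  unfolding configs_def flip_def by auto

lemma flip_flip [simp]: "flip i (flip i x) = x"
  unfolding flip_def by auto

lemma flip_other [simp]: "k \<noteq> i \<Longrightarrow> flip i x k = x k"
  unfolding flip_def by auto

lemma flip_same [simp]: "flip i x i = - x i"
  unfolding flip_def by auto

lemma configs_pm: "x \<in> configs n \<Longrightarrow> i < n \<Longrightarrow> x i = 1 \<or> x i = -1"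
  unfolding configs_def by auto

lemma configs_abs: "x \<in> configs n \<Longrightarrow> i < n \<Longrightarrow> \<bar>x i\<bar> = 1"
  unfolding configs_def by auto

lemma configs_sq: "x \<in> configs n \<Longrightarrow> i < n \<Longrightarrow> x i * x i = 1"
  unfolding configs_def by auto

lemma loc_field_upd: "i < n \<Longrightarrow> loc_field A n (x(i:=v)) k = loc_field A n x k + A n k i * (v - x i)"
proof -
  assume i: "i < n"
  have "loc_field A n (x(i:=v)) k = (\<Sum>j<n. A n k j * x j + (if j = i then A n k i * (v - x i) else 0))"
    unfolding loc_field_def by (intro sum.cong) (auto simp: algebra_simps)
  also have "\<dots> = loc_field A n x k + A n k i * (v - x i)"
    using i by (simp add: sum.distrib loc_field_def)
  finally show ?thesis .
qed

lemma loc_field_flip: "i < n \<Longrightarrow> loc_field A n (flip i x) k = loc_field A n x k - 2 * A n k i * x i"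
  unfolding flip_def by (simp add: loc_field_upd)

lemma loc_field_flip_same: "i < n \<Longrightarrow> A n i i = 0 \<Longrightarrow> loc_field A n (flip i x) i = loc_field A n x i"
  by (simp add: loc_field_flip)

lemma weight_flip:
  assumes symm: "\<And>j k. j < n \<Longrightarrow> k < n \<Longrightarrow> A n j k = A n k j"
    and diag: "A n i i = 0" and i: "i < n"
  shows "ising_weight A n \<beta> B (flip i x) =
         ising_weight A n \<beta> B x * exp (- (2 * x i * (\<beta> * loc_field A n x i + B)))"
proof -
  have q: "(\<Sum>j<n. \<Sum>k<n. flip i x j * A n j k * flip i x k) =
        (\<Sum>j<n. \<Sum>k<n. x j * A n j k * x k) - 4 * x i * loc_field A n x i"
  proof -
    have s: "(\<Sum>j<n. x j * A n j i) = loc_field A n x i"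
      unfolding loc_field_def using symm i by (intro sum.cong) auto
    show ?thesis unfolding flip_def using quad_upd[OF i, where x=x and M="A n" and v="- x i"] diag s
      by (simp add: loc_field_def algebra_simps)
  qed
  have l: "(\<Sum>k<n. flip i x k) = (\<Sum>k<n. x k) - 2 * x i"
  proof -
    have "(\<Sum>k<n. flip i x k) = (\<Sum>k<n. x k + (if k = i then - 2 * x i else 0))"
      by (intro sum.cong) (auto simp: flip_def)
    also have "\<dots> = (\<Sum>k<n. x k) - 2 * x i" using i by (simp add: sum.distrib)
    finally show ?thesis .
  qed
  show ?thesis unfolding ising_weight_def q l
    by (simp add: exp_add[symmetric] algebra_simps)
qed

lemma orth_sum:
  assumes symm: "\<And>j k. j < n \<Longrightarrow> k < n \<Longrightarrow> A n j k = A n k j"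
    and diag: "A n i i = 0" and i: "i < n"
    and inv: "\<And>x. x \<in> configs n \<Longrightarrow> \<phi> (flip i x) = \<phi> x"
  shows "(\<Sum>x\<in>configs n. ising_weight A n \<beta> B x * ((x i - tanh (\<beta> * loc_field A n x i + B)) * \<phi> x)) = 0"
proof -
  define h where "h x = ising_weight A n \<beta> B x * ((x i - tanh (\<beta> * loc_field A n x i + B)) * \<phi> x)" for x
  have bij: "bij_betw (flip i) (configs n) (configs n)"
    by (rule bij_betw_byWitness[where f'="flip i"]) (auto simp: flip_configs[OF i])
  have "(\<Sum>x\<in>configs n. h x) = (\<Sum>x\<in>configs n. h (flip i x))"
    using sum.reindex_bij_betw[OF bij, of h] by simp
  moreover have "h x + h (flip i x) = 0" if x: "x \<in> configs n" for x
  proof -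
    define u where "u = \<beta> * loc_field A n x i + B"
    have "h (flip i x) = ising_weight A n \<beta> B x * exp (- (2 * x i * u)) * ((- x i - tanh u) * \<phi> x)"
      unfolding h_def u_def using weight_flip[where A=A and n=n, OF symm diag i] loc_field_flip_same[where A=A and n=n and x=x, OF i diag] inv[OF x]
      by simp
    then have "h x + h (flip i x) = ising_weight A n \<beta> B x * \<phi> x *
                 ((x i - tanh u) + exp (- (2 * x i * u)) * (- x i - tanh u))"
      unfolding h_def u_def by (simp add: algebra_simps)
    also have "\<dots> = 0" using tanh_flip_id[of "x i" u] configs_pm[OF x i] by simp
    finally show ?thesis .
  qed
  ultimately have "(\<Sum>x\<in>configs n. h x) + (\<Sum>x\<in>configs n. h x) = 0"
  proof -
    assume e: "(\<Sum>x\<in>configs n. h x) = (\<Sum>x\<in>configs n. h (flip i x))"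
      and z: "\<And>x. x \<in> configs n \<Longrightarrow> h x + h (flip i x) = 0"
    have "(\<Sum>x\<in>configs n. h x) + (\<Sum>x\<in>configs n. h (flip i x)) = (\<Sum>x\<in>configs n. h x + h (flip i x))"
      by (simp add: sum.distrib)
    also have "\<dots> = 0" using z by simp
    finally show ?thesis using e by simp
  qed
  then show ?thesis unfolding h_def by simp
qed




lemma EE_abs_le: "(\<And>x. x \<in> configs n \<Longrightarrow> \<bar>g x\<bar> \<le> h x) \<Longrightarrow> \<bar>EE A n \<beta> B g\<bar> \<le> EE A n \<beta> B h"
proof -
  assume a: "\<And>x. x \<in> configs n \<Longrightarrow> \<bar>g x\<bar> \<le> h x"
  have "EE A n \<beta> B g \<le> EE A n \<beta> B h" using a by (intro EE_mono) (metis abs_le_D1)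
  moreover have "EE A n \<beta> B (\<lambda>x. - g x) \<le> EE A n \<beta> B h" using a by (intro EE_mono) (metis abs_le_D2)
  then have "- EE A n \<beta> B g \<le> EE A n \<beta> B h" using EE_cmult[of A n \<beta> B "-1" g] by simp
  ultimately show ?thesis by linarith
qed

lemma x_minus_tanh_bd: "x \<in> configs n \<Longrightarrow> j < n \<Longrightarrow> \<bar>x j - tanh u\<bar> \<le> 2"
  using configs_abs[of x n j] tanh_real_bounds[of u] by auto

lemma orth_EE:
  assumes symm: "\<And>j k. j < n \<Longrightarrow> k < n \<Longrightarrow> A n j k = A n k j"
    and diag: "A n i i = 0" and i: "i < n"
    and inv: "\<And>x. x \<in> configs n \<Longrightarrow> \<phi> (flip i x) = \<phi> x"
  shows "EE A n \<beta> B (\<lambda>x. (x i - tanh (\<beta> * loc_field A n x i + B)) * \<phi> x) = 0"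
  unfolding EE_def using orth_sum[where A=A and n=n and i=i and \<phi>=\<phi> and \<beta>=\<beta> and B=B, OF symm diag i inv] by simp

locale cov_setup =
  fixes A :: matseq and n :: nat and \<beta> B :: real and c :: "nat \<Rightarrow> (nat \<Rightarrow> real) \<Rightarrow> real"
    and Kc Lc :: real
  assumes symm: "\<And>j k. j < n \<Longrightarrow> k < n \<Longrightarrow> A n j k = A n k j"
    and diag: "\<And>j. j < n \<Longrightarrow> A n j j = 0"
    and nonneg: "\<And>j k. j < n \<Longrightarrow> k < n \<Longrightarrow> A n j k \<ge> 0"
    and c_inv: "\<And>j x. j < n \<Longrightarrow> x \<in> configs n \<Longrightarrow> c j (flip j x) = c j x"
    and c_bd: "\<And>j x. j < n \<Longrightarrow> x \<in> configs n \<Longrightarrow> \<bar>c j x\<bar> \<le> Kc"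
    and c_lip: "\<And>j k x. j < n \<Longrightarrow> k < n \<Longrightarrow> j \<noteq> k \<Longrightarrow> x \<in> configs n \<Longrightarrow>
                  \<bar>c k (flip j x) - c k x\<bar> \<le> Lc * A n k j"
begin

definition f :: "nat \<Rightarrow> (nat \<Rightarrow> real) \<Rightarrow> real" where
  "f j x = c j x * (x j - tanh (\<beta> * loc_field A n x j + B))"

lemma Kc_nonneg: "n > 0 \<Longrightarrow> Kc \<ge> 0"
  using c_bd[of 0 "\<lambda>i. if i < n then 1 else 0"] configs_ne[of n] by fastforce

lemma f_bd: "j < n \<Longrightarrow> x \<in> configs n \<Longrightarrow> \<bar>f j x\<bar> \<le> 2 * Kc"
proof -
  assume j: "j < n" and x: "x \<in> configs n"
  have "\<bar>c j x\<bar> * \<bar>x j - tanh (\<beta> * loc_field A n x j + B)\<bar> \<le> Kc * 2"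
    using c_bd[OF j x] x_minus_tanh_bd[OF x j] by (intro mult_mono) auto
  then show ?thesis unfolding f_def abs_mult by simp
qed

lemma f_lip:
  assumes j: "j < n" and k: "k < n" and jk: "j \<noteq> k" and x: "x \<in> configs n"
  shows "\<bar>f k (flip j x) - f k x\<bar> \<le> 2 * (Lc + \<bar>\<beta>\<bar> * Kc) * A n k j"
proof -
  define t where "t y = tanh (\<beta> * loc_field A n y k + B)" for y
  have xk: "flip j x k = x k" using jk by simp
  have "f k (flip j x) - f k x = (c k (flip j x) - c k x) * (x k - t (flip j x)) + c k x * (t x - t (flip j x))"
    unfolding f_def t_def xk by (simp add: algebra_simps)
  moreover have "\<bar>(c k (flip j x) - c k x) * (x k - t (flip j x))\<bar> \<le> Lc * A n k j * 2"
    unfolding abs_mult t_def using c_lip[OF j k jk x] x_minus_tanh_bd[OF x k]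
    by (intro mult_mono) auto
  moreover have "\<bar>c k x * (t x - t (flip j x))\<bar> \<le> Kc * (\<bar>\<beta>\<bar> * (2 * A n k j))"
  proof -
    have "\<bar>t x - t (flip j x)\<bar> \<le> \<bar>(\<beta> * loc_field A n x k + B) - (\<beta> * loc_field A n (flip j x) k + B)\<bar>"
      unfolding t_def by (rule tanh_lip)
    also have "\<dots> = \<bar>\<beta>\<bar> * \<bar>loc_field A n x k - loc_field A n (flip j x) k\<bar>"
      by (simp add: abs_mult[symmetric] algebra_simps)
    also have "\<dots> = \<bar>\<beta>\<bar> * \<bar>2 * A n k j * x j\<bar>"
      using loc_field_flip[OF j, of A x k] by simp
    also have "\<dots> = \<bar>\<beta>\<bar> * (2 * A n k j)"
      using configs_abs[OF x j] nonneg[OF k j] by (simp add: abs_mult)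
    finally show ?thesis unfolding abs_mult using c_bd[OF k x] by (intro mult_mono) auto
  qed
  moreover have "2 * (Lc + \<bar>\<beta>\<bar> * Kc) * A n k j = Lc * A n k j * 2 + Kc * (\<bar>\<beta>\<bar> * (2 * A n k j))"
    by (simp add: algebra_simps)
  ultimately show ?thesis
    using abs_triangle_ineq[of "(c k (flip j x) - c k x) * (x k - t (flip j x))" "c k x * (t x - t (flip j x))"]
    by linarith
qed

lemma cov_off:
  assumes j: "j < n" and k: "k < n" and jk: "j \<noteq> k"
  shows "\<bar>EE A n \<beta> B (\<lambda>x. f j x * f k x)\<bar> \<le> 2 * Kc * (Lc + \<bar>\<beta>\<bar> * Kc) * A n k j"
proof -
  define g where "g x = (f k x + f k (flip j x)) / 2" for x
  have ginv: "g (flip j x) = g x" for x unfolding g_def by simp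
  have "EE A n \<beta> B (\<lambda>x. f j x * g x) = EE A n \<beta> B (\<lambda>x. (x j - tanh (\<beta> * loc_field A n x j + B)) * (c j x * g x))"
    by (rule EE_cong) (simp add: f_def algebra_simps)
  also have "\<dots> = 0"
    by (rule orth_EE[where A=A and n=n, OF symm diag[OF j] j]) (auto simp: c_inv[OF j] ginv)
  finally have z: "EE A n \<beta> B (\<lambda>x. f j x * g x) = 0" .
  have "EE A n \<beta> B (\<lambda>x. f j x * f k x) = EE A n \<beta> B (\<lambda>x. f j x * (f k x - g x)) + EE A n \<beta> B (\<lambda>x. f j x * g x)"
    using EE_sum[of A n \<beta> B "\<lambda>b x. if b then f j x * (f k x - g x) else f j x * g x" UNIV]
    by (simp add: UNIV_bool algebra_simps)
  also have "\<dots> = EE A n \<beta> B (\<lambda>x. f j x * (f k x - g x))" using z by simp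
  finally have e: "EE A n \<beta> B (\<lambda>x. f j x * f k x) = EE A n \<beta> B (\<lambda>x. f j x * (f k x - g x))" .
  have "\<bar>EE A n \<beta> B (\<lambda>x. f j x * (f k x - g x))\<bar> \<le> EE A n \<beta> B (\<lambda>x. 2 * Kc * (Lc + \<bar>\<beta>\<bar> * Kc) * A n k j)"
  proof (rule EE_abs_le)
    fix x assume x: "x \<in> configs n"
    have "f k x - g x = (f k x - f k (flip j x)) / 2" unfolding g_def by (simp add: field_simps)
    then have e1: "\<bar>f k x - g x\<bar> = \<bar>(f k x - f k (flip j x)) / 2\<bar>" by (rule arg_cong)
    have e2: "\<bar>(f k x - f k (flip j x)) / 2\<bar> = \<bar>f k (flip j x) - f k x\<bar> / 2"
      by (simp add: abs_minus_commute[of "f k x"])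
    have "\<bar>f k x - g x\<bar> = \<bar>f k (flip j x) - f k x\<bar> / 2" using e1 e2 by simp
    also have "\<dots> \<le> (Lc + \<bar>\<beta>\<bar> * Kc) * A n k j" using f_lip[OF j k jk x] by (simp add: algebra_simps)
    finally have "\<bar>f j x\<bar> * \<bar>f k x - g x\<bar> \<le> (2 * Kc) * ((Lc + \<bar>\<beta>\<bar> * Kc) * A n k j)"
      using f_bd[OF j x] by (intro mult_mono) auto
    then have "\<bar>f j x * (f k x - g x)\<bar> \<le> (2 * Kc) * ((Lc + \<bar>\<beta>\<bar> * Kc) * A n k j)"
      by (simp only: abs_mult)
    also have "\<dots> = 2 * Kc * (Lc + \<bar>\<beta>\<bar> * Kc) * A n k j" by (simp add: algebra_simps)
    finally show "\<bar>f j x * (f k x - g x)\<bar> \<le> 2 * Kc * (Lc + \<bar>\<beta>\<bar> * Kc) * A n k j" .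
  qed
  then show ?thesis unfolding e EE_const .
qed

lemma cov_diag: "j < n \<Longrightarrow> EE A n \<beta> B (\<lambda>x. f j x * f j x) \<le> 4 * Kc ^ 2"
proof -
  assume j: "j < n"
  have "EE A n \<beta> B (\<lambda>x. f j x * f j x) \<le> EE A n \<beta> B (\<lambda>x. 4 * Kc ^ 2)"
  proof (rule EE_mono)
    fix x assume x: "x \<in> configs n"
    have "\<bar>f j x\<bar> * \<bar>f j x\<bar> \<le> (2 * Kc) * (2 * Kc)" using f_bd[OF j x] by (intro mult_mono) auto
    then show "f j x * f j x \<le> 4 * Kc ^ 2" by (simp add: power2_eq_square abs_mult[symmetric])
  qed
  then show ?thesis by (simp add: EE_const)
qed

lemma var_bound:
  "EE A n \<beta> B (\<lambda>x. (\<Sum>j<n. a j * f j x) ^ 2) \<le>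
     4 * Kc ^ 2 * (\<Sum>j<n. (a j) ^ 2) + 2 * Kc * (Lc + \<bar>\<beta>\<bar> * Kc) * (\<Sum>j<n. \<Sum>k<n. \<bar>a j\<bar> * \<bar>a k\<bar> * A n k j)"
proof -
  define C where "C = 2 * Kc * (Lc + \<bar>\<beta>\<bar> * Kc)"
  have "EE A n \<beta> B (\<lambda>x. (\<Sum>j<n. a j * f j x) ^ 2) = EE A n \<beta> B (\<lambda>x. \<Sum>j<n. \<Sum>k<n. a j * a k * (f j x * f k x))"
  proof (rule EE_cong)
    fix x
    show "(\<Sum>j<n. a j * f j x) ^ 2 = (\<Sum>j<n. \<Sum>k<n. a j * a k * (f j x * f k x))"
      unfolding power2_eq_square sum_product by (intro sum.cong refl) (simp add: mult_ac)
  qed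
  also have "\<dots> = (\<Sum>j<n. \<Sum>k<n. a j * a k * EE A n \<beta> B (\<lambda>x. f j x * f k x))"
    by (simp add: EE_sum EE_cmult)
  also have "\<dots> \<le> (\<Sum>j<n. \<Sum>k<n. (if j = k then 4 * Kc ^ 2 * (a j) ^ 2 else 0) + C * (\<bar>a j\<bar> * \<bar>a k\<bar> * A n k j))"
  proof (intro sum_mono)
    fix j k assume j: "j \<in> {..<n}" and k: "k \<in> {..<n}"
    show "a j * a k * EE A n \<beta> B (\<lambda>x. f j x * f k x) \<le> (if j = k then 4 * Kc ^ 2 * (a j) ^ 2 else 0) + C * (\<bar>a j\<bar> * \<bar>a k\<bar> * A n k j)"
    proof (cases "j = k")
      case True
      have "a j * a j * EE A n \<beta> B (\<lambda>x. f j x * f j x) \<le> a j * a j * (4 * Kc ^ 2)"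
        using cov_diag[of j] j by (intro mult_left_mono) auto
      then show ?thesis using True j diag[of j] by (simp add: power2_eq_square algebra_simps)
    next
      case False
      have "a j * a k * EE A n \<beta> B (\<lambda>x. f j x * f k x) \<le> \<bar>a j * a k\<bar> * \<bar>EE A n \<beta> B (\<lambda>x. f j x * f k x)\<bar>"
        by (metis abs_ge_self abs_mult)
      also have "\<dots> \<le> \<bar>a j * a k\<bar> * (C * A n k j)"
        using cov_off[of j k] j k False unfolding C_def by (intro mult_left_mono) auto
      finally show ?thesis using False by (simp add: abs_mult algebra_simps)
    qed
  qed
  also have "\<dots> = 4 * Kc ^ 2 * (\<Sum>j<n. (a j) ^ 2) + C * (\<Sum>j<n. \<Sum>k<n. \<bar>a j\<bar> * \<bar>a k\<bar> * A n k j)"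
    by (simp add: sum.distrib sum_distrib_left)
  finally show ?thesis unfolding C_def .
qed

end




definition tt :: "matseq \<Rightarrow> nat \<Rightarrow> real \<Rightarrow> real \<Rightarrow> (nat \<Rightarrow> real) \<Rightarrow> nat \<Rightarrow> real" where
  "tt A n \<beta> B x j = tanh (\<beta> * loc_field A n x j + B)"

locale ising_n =
  fixes A :: matseq and n :: nat and \<beta> B \<gamma> :: real
  assumes symm: "\<And>j k. j < n \<Longrightarrow> k < n \<Longrightarrow> A n j k = A n k j"
    and diag: "\<And>j. j < n \<Longrightarrow> A n j j = 0"
    and nonneg: "\<And>j k. j < n \<Longrightarrow> k < n \<Longrightarrow> A n j k \<ge> 0"
    and rowbd: "\<And>i. i < n \<Longrightarrow> row_sum A n i \<le> \<gamma>"
    and gam: "\<gamma> \<ge> 0"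
begin

lemma row_nonneg: "i < n \<Longrightarrow> row_sum A n i \<ge> 0"
  unfolding row_sum_def using nonneg by (intro sum_nonneg) auto

lemma col_sum: "k < n \<Longrightarrow> (\<Sum>j<n. A n j k) = row_sum A n k"
  unfolding row_sum_def using symm by (intro sum.cong) auto

lemma loc_field_bd: "x \<in> configs n \<Longrightarrow> i < n \<Longrightarrow> \<bar>loc_field A n x i\<bar> \<le> \<gamma>"
proof -
  assume x: "x \<in> configs n" and i: "i < n"
  have "\<bar>loc_field A n x i\<bar> \<le> (\<Sum>j<n. \<bar>A n i j * x j\<bar>)" unfolding loc_field_def by (rule sum_abs)
  also have "\<dots> = (\<Sum>j<n. A n i j)" using nonneg[OF i] configs_abs[OF x] by (intro sum.cong) (auto simp: abs_mult)
  also have "\<dots> \<le> \<gamma>" using rowbd[OF i] unfolding row_sum_def .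
  finally show ?thesis .
qed

lemma double_sum_bd:
  assumes "\<And>j. j < n \<Longrightarrow> \<bar>a j\<bar> \<le> W"
  shows "(\<Sum>j<n. \<Sum>k<n. \<bar>a j\<bar> * \<bar>a k\<bar> * A n k j) \<le> W ^ 2 * (real n * \<gamma>)"
proof (cases "n = 0")
  case True then show ?thesis by simp
next
  case False
  then have W: "W \<ge> 0" using assms[of 0] by auto
  have "(\<Sum>j<n. \<Sum>k<n. \<bar>a j\<bar> * \<bar>a k\<bar> * A n k j) \<le> (\<Sum>j<n. \<Sum>k<n. W * W * A n k j)"
    using assms nonneg W by (intro sum_mono mult_right_mono mult_mono) auto
  also have "\<dots> = W ^ 2 * (\<Sum>j<n. \<Sum>k<n. A n k j)" by (simp add: sum_distrib_left power2_eq_square)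
  also have "(\<Sum>j<n. \<Sum>k<n. A n k j) = (\<Sum>j<n. row_sum A n j)" unfolding row_sum_def
    using symm by (intro sum.cong) auto
  also have "\<dots> \<le> (\<Sum>j<n. \<gamma>)" using rowbd by (intro sum_mono) auto
  finally show ?thesis by (simp add: mult_left_mono)
qed

lemma triple_bd:
  "(\<Sum>i<n. \<Sum>j<n. \<Sum>k<n. A n i j * A n i k * A n k j) \<le> \<gamma> * (\<Sum>i<n. \<Sum>j<n. (A n i j)^2)"
proof -
  have s1: "(\<Sum>i<n. \<Sum>j<n. \<Sum>k<n. A n i j * A n i k * A n k j) \<le>
        (\<Sum>i<n. \<Sum>j<n. \<Sum>k<n. ((A n i j)^2 / 2 + (A n i k)^2 / 2) * A n k j)"
  proof (intro sum_mono mult_right_mono)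
    fix i j k assume "i \<in> {..<n}" "j \<in> {..<n}" "k \<in> {..<n}"
    then show "0 \<le> A n k j" using nonneg by auto
    have "0 \<le> (A n i j - A n i k)^2" by simp
    then show "A n i j * A n i k \<le> (A n i j)^2 / 2 + (A n i k)^2 / 2"
      by (simp add: power2_eq_square algebra_simps)
  qed
  have s2: "(\<Sum>i<n. \<Sum>j<n. \<Sum>k<n. ((A n i j)^2 / 2 + (A n i k)^2 / 2) * A n k j) = (\<Sum>i<n. \<Sum>j<n. \<Sum>k<n. (A n i j)^2 / 2 * A n k j) + (\<Sum>i<n. \<Sum>j<n. \<Sum>k<n. (A n i k)^2 / 2 * A n k j)"
    by (simp only: distrib_right sum.distrib)
  have e1: "(\<Sum>i<n. \<Sum>j<n. \<Sum>k<n. (A n i j)^2 / 2 * A n k j) = (\<Sum>i<n. \<Sum>j<n. (A n i j)^2 / 2 * (\<Sum>k<n. A n k j))"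
    by (simp only: sum_distrib_left)
  have e2: "(\<Sum>i<n. \<Sum>j<n. \<Sum>k<n. (A n i k)^2 / 2 * A n k j) = (\<Sum>i<n. \<Sum>k<n. (A n i k)^2 / 2 * (\<Sum>j<n. A n k j))"
  proof (rule sum.cong[OF refl])
    fix i
    have "(\<Sum>j<n. \<Sum>k<n. (A n i k)^2 / 2 * A n k j) = (\<Sum>k<n. \<Sum>j<n. (A n i k)^2 / 2 * A n k j)"
      by (rule sum.swap)
    then show "(\<Sum>j<n. \<Sum>k<n. (A n i k)^2 / 2 * A n k j) = (\<Sum>k<n. (A n i k)^2 / 2 * (\<Sum>j<n. A n k j))"
      by (simp only: sum_distrib_left)
  qed
  have b1: "(\<Sum>i<n. \<Sum>j<n. (A n i j)^2 / 2 * (\<Sum>k<n. A n k j)) \<le> (\<Sum>i<n. \<Sum>j<n. (A n i j)^2 / 2 * \<gamma>)"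
    using col_sum rowbd by (intro sum_mono mult_left_mono) auto
  have b2: "(\<Sum>i<n. \<Sum>k<n. (A n i k)^2 / 2 * (\<Sum>j<n. A n k j)) \<le> (\<Sum>i<n. \<Sum>k<n. (A n i k)^2 / 2 * \<gamma>)"
    using rowbd unfolding row_sum_def by (intro sum_mono mult_left_mono) auto
  have e3: "(\<Sum>i<n. \<Sum>j<n. (A n i j)^2 / 2 * \<gamma>) = \<gamma> / 2 * (\<Sum>i<n. \<Sum>j<n. (A n i j)^2)"
    by (simp add: sum_distrib_left algebra_simps)
  show ?thesis using s1 s2 e1 e2 b1 b2 e3 by linarith
qed


lemma EG2: "EE A n \<beta> B (\<lambda>x. (\<Sum>j<n. (x j - tanh (\<beta> * loc_field A n x j + B)))^2) \<le> (4 + 2 * \<bar>\<beta>\<bar> * \<gamma>) * real n"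
proof -
  interpret c1: cov_setup A n \<beta> B "\<lambda>j x. 1" 1 0
    by unfold_locales (auto simp: symm diag nonneg)
  have "EE A n \<beta> B (\<lambda>x. (\<Sum>j<n. 1 * c1.f j x)^2) \<le>
     4 * 1 ^ 2 * (\<Sum>j<n. 1 ^ 2) + 2 * 1 * (0 + \<bar>\<beta>\<bar> * 1) * (\<Sum>j<n. \<Sum>k<n. \<bar>1\<bar> * \<bar>1\<bar> * A n k j)"
    by (rule c1.var_bound)
  also have "\<dots> \<le> 4 * real n + 2 * \<bar>\<beta>\<bar> * (1 ^ 2 * (real n * \<gamma>))"
    using double_sum_bd[of "\<lambda>j. 1" 1] by (simp add: mult_left_mono)
  finally show ?thesis unfolding c1.f_def by (simp add: algebra_simps)
qed

lemma EF: "EE A n \<beta> B (\<lambda>x. (\<Sum>j<n. row_sum A n j * (x j - tanh (\<beta> * loc_field A n x j + B)))^2)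
   \<le> (4 * \<gamma>^2 + 2 * \<bar>\<beta>\<bar> * \<gamma>^3) * real n"
proof -
  interpret c1: cov_setup A n \<beta> B "\<lambda>j x. 1" 1 0
    by unfold_locales (auto simp: symm diag nonneg)
  have "EE A n \<beta> B (\<lambda>x. (\<Sum>j<n. row_sum A n j * c1.f j x)^2) \<le>
     4 * 1 ^ 2 * (\<Sum>j<n. (row_sum A n j) ^ 2) + 2 * 1 * (0 + \<bar>\<beta>\<bar> * 1) * (\<Sum>j<n. \<Sum>k<n. \<bar>row_sum A n j\<bar> * \<bar>row_sum A n k\<bar> * A n k j)"
    by (rule c1.var_bound)
  also have "\<dots> \<le> 4 * (\<Sum>j<n. \<gamma> ^ 2) + 2 * \<bar>\<beta>\<bar> * (\<gamma> ^ 2 * (real n * \<gamma>))"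
  proof -
    have "(\<Sum>j<n. (row_sum A n j) ^ 2) \<le> (\<Sum>j<n. \<gamma> ^ 2)"
      using row_nonneg rowbd by (intro sum_mono power_mono) auto
    moreover have "(\<Sum>j<n. \<Sum>k<n. \<bar>row_sum A n j\<bar> * \<bar>row_sum A n k\<bar> * A n k j) \<le> \<gamma> ^ 2 * (real n * \<gamma>)"
      using row_nonneg rowbd by (intro double_sum_bd) auto
    ultimately show ?thesis by simp (intro add_mono mult_left_mono, auto)
  qed
  finally show ?thesis unfolding c1.f_def by (simp add: algebra_simps power3_eq_cube power2_eq_square)
qed

lemma EG1: "EE A n \<beta> B (\<lambda>x. (\<Sum>j<n. loc_field A n x j * (x j - tanh (\<beta> * loc_field A n x j + B)))^2)
   \<le> (4 * \<gamma>^2 + 2 * \<gamma> * (2 + \<bar>\<beta>\<bar> * \<gamma>) * \<gamma>) * real n"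
proof -
  interpret c1: cov_setup A n \<beta> B "\<lambda>j x. loc_field A n x j" \<gamma> 2
  proof unfold_locales
    show "\<And>j x. j < n \<Longrightarrow> loc_field A n (flip j x) j = loc_field A n x j"
      using diag by (simp add: loc_field_flip_same)
    show "\<And>j x. j < n \<Longrightarrow> x \<in> configs n \<Longrightarrow> \<bar>loc_field A n x j\<bar> \<le> \<gamma>" by (rule loc_field_bd)
    show "\<bar>loc_field A n (flip j x) k - loc_field A n x k\<bar> \<le> 2 * A n k j"
      if "j < n" "k < n" "j \<noteq> k" "x \<in> configs n" for j k x
      using loc_field_flip[of j n A x k] that configs_abs[of x n j] nonneg[of k j] by (simp add: abs_mult)
  qed (auto simp: symm diag nonneg)
  have "EE A n \<beta> B (\<lambda>x. (\<Sum>j<n. 1 * c1.f j x)^2) \<le>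
     4 * \<gamma> ^ 2 * (\<Sum>j<n. 1 ^ 2) + 2 * \<gamma> * (2 + \<bar>\<beta>\<bar> * \<gamma>) * (\<Sum>j<n. \<Sum>k<n. \<bar>1\<bar> * \<bar>1\<bar> * A n k j)"
    by (rule c1.var_bound)
  also have "\<dots> \<le> 4 * \<gamma> ^ 2 * real n + 2 * \<gamma> * (2 + \<bar>\<beta>\<bar> * \<gamma>) * (1 ^ 2 * (real n * \<gamma>))"
    using double_sum_bd[of "\<lambda>j. 1" 1] gam by (simp add: mult_left_mono)
  finally show ?thesis unfolding c1.f_def by (simp add: algebra_simps)
qed

lemma ED: "EE A n \<beta> B (\<lambda>x. \<Sum>i<n. (\<Sum>j<n. A n i j * (x j - tanh (\<beta> * loc_field A n x j + B)))^2)
   \<le> (4 + 2 * \<bar>\<beta>\<bar> * \<gamma>) * (\<Sum>i<n. \<Sum>j<n. (A n i j)^2)"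
proof -
  interpret c1: cov_setup A n \<beta> B "\<lambda>j x. 1" 1 0
    by unfold_locales (auto simp: symm diag nonneg)
  have "EE A n \<beta> B (\<lambda>x. \<Sum>i<n. (\<Sum>j<n. A n i j * c1.f j x)^2)
     = (\<Sum>i<n. EE A n \<beta> B (\<lambda>x. (\<Sum>j<n. A n i j * c1.f j x)^2))" by (rule EE_sum)
  also have "\<dots> \<le> (\<Sum>i<n. 4 * 1 ^ 2 * (\<Sum>j<n. (A n i j) ^ 2) + 2 * 1 * (0 + \<bar>\<beta>\<bar> * 1) * (\<Sum>j<n. \<Sum>k<n. \<bar>A n i j\<bar> * \<bar>A n i k\<bar> * A n k j))"
    by (intro sum_mono c1.var_bound)
  also have "\<dots> = 4 * (\<Sum>i<n. \<Sum>j<n. (A n i j) ^ 2) + 2 * \<bar>\<beta>\<bar> * (\<Sum>i<n. \<Sum>j<n. \<Sum>k<n. A n i j * A n i k * A n k j)"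
    using nonneg by (simp add: sum.distrib sum_distrib_left)
  also have "\<dots> \<le> 4 * (\<Sum>i<n. \<Sum>j<n. (A n i j) ^ 2) + 2 * \<bar>\<beta>\<bar> * (\<gamma> * (\<Sum>i<n. \<Sum>j<n. (A n i j)^2))"
    using triple_bd by (intro add_left_mono mult_left_mono) auto
  finally show ?thesis unfolding c1.f_def by (simp add: algebra_simps)
qed

end




lemma sq4: "(a + b + c + d)^2 \<le> 4 * (a^2 + b^2 + c^2 + (d::real)^2)"
proof -
  have "0 \<le> (a-b)^2 + (a-c)^2 + (a-d)^2 + (b-c)^2 + (b-d)^2 + (c-d)^2" by simp
  then show ?thesis by (simp add: power2_eq_square algebra_simps)
qed

lemma sq2: "(a + b)^2 \<le> 2 * (a^2 + (b::real)^2)"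
proof -
  have "0 \<le> (a-b)^2" by simp
  then show ?thesis by (simp add: power2_eq_square algebra_simps)
qed

context ising_n
begin

lemma sum_loc_field: "(\<Sum>i<n. loc_field A n x i) = (\<Sum>j<n. row_sum A n j * x j)"
proof -
  have "(\<Sum>i<n. loc_field A n x i) = (\<Sum>j<n. \<Sum>i<n. A n i j * x j)"
    unfolding loc_field_def by (rule sum.swap)
  also have "\<dots> = (\<Sum>j<n. row_sum A n j * x j)"
    by (intro sum.cong refl) (simp add: sum_distrib_right[symmetric] col_sum)
  finally show ?thesis .
qed

lemma cs_weighted:
  assumes i: "i < n"
  shows "(\<Sum>j<n. A n i j * d j)^2 \<le> row_sum A n i * (\<Sum>j<n. A n i j * (d j)^2)"
proof -
  have "(\<Sum>j<n. A n i j * d j)^2 = (\<Sum>j<n. sqrt (A n i j) * (sqrt (A n i j) * d j))^2"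
    using nonneg[OF i] by (intro arg_cong[where f="\<lambda>t. t^2"] sum.cong) (auto simp: mult.assoc[symmetric])
  also have "\<dots> \<le> (\<Sum>j<n. (sqrt (A n i j))^2) * (\<Sum>j<n. (sqrt (A n i j) * d j)^2)"
    by (rule Cauchy_Schwarz_ineq_sum)
  also have "\<dots> = row_sum A n i * (\<Sum>j<n. A n i j * (d j)^2)"
    unfolding row_sum_def using nonneg[OF i] by (simp add: power_mult_distrib)
  finally show ?thesis .
qed

lemma g_bound: "(\<Sum>i<n. (\<Sum>j<n. A n i j * d j)^2) \<le> \<gamma>^2 * (\<Sum>j<n. (d j)^2)"
proof -
  have "(\<Sum>i<n. (\<Sum>j<n. A n i j * d j)^2) \<le> (\<Sum>i<n. \<gamma> * (\<Sum>j<n. A n i j * (d j)^2))"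
  proof (intro sum_mono)
    fix i assume i: "i \<in> {..<n}"
    have "(\<Sum>j<n. A n i j * d j)^2 \<le> row_sum A n i * (\<Sum>j<n. A n i j * (d j)^2)"
      using cs_weighted i by auto
    also have "\<dots> \<le> \<gamma> * (\<Sum>j<n. A n i j * (d j)^2)"
      using rowbd i nonneg by (intro mult_right_mono sum_nonneg) auto
    finally show "(\<Sum>j<n. A n i j * d j)^2 \<le> \<gamma> * (\<Sum>j<n. A n i j * (d j)^2)" .
  qed
  also have "\<dots> = \<gamma> * (\<Sum>i<n. \<Sum>j<n. A n i j * (d j)^2)" by (rule sum_distrib_left[symmetric])
  also have "\<dots> = \<gamma> * (\<Sum>j<n. row_sum A n j * (d j)^2)"
  proof -
    have "(\<Sum>i<n. \<Sum>j<n. A n i j * (d j)^2) = (\<Sum>j<n. \<Sum>i<n. A n i j * (d j)^2)" by (rule sum.swap)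
    also have "\<dots> = (\<Sum>j<n. row_sum A n j * (d j)^2)"
      by (intro sum.cong refl) (simp add: sum_distrib_right[symmetric] col_sum)
    finally show ?thesis by simp
  qed
  also have "\<dots> \<le> \<gamma> * (\<Sum>j<n. \<gamma> * (d j)^2)"
    using rowbd gam by (intro mult_left_mono sum_mono mult_right_mono) auto
  finally show ?thesis by (simp add: sum_distrib_left power2_eq_square mult.assoc)
qed

lemma T_eq: "n > 0 \<Longrightarrow> (\<Sum>i<n. (loc_field A n x i - loc_field_mean A n x)^2) = real n * T_stat A n x"
  unfolding T_stat_def by simp

lemma tc_bound:
  assumes "n > 0"
  shows "(\<Sum>j<n. (tanh (\<beta> * loc_field A n x j + B) - tanh (\<beta> * loc_field_mean A n x + B))^2)
         \<le> \<beta>^2 * (real n * T_stat A n x)"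
proof -
  have "(\<Sum>j<n. (tanh (\<beta> * loc_field A n x j + B) - tanh (\<beta> * loc_field_mean A n x + B))^2)
        \<le> (\<Sum>j<n. \<beta>^2 * (loc_field A n x j - loc_field_mean A n x)^2)"
  proof (intro sum_mono)
    fix j
    have "\<bar>tanh (\<beta> * loc_field A n x j + B) - tanh (\<beta> * loc_field_mean A n x + B)\<bar> \<le>
          \<bar>\<beta> * (loc_field A n x j - loc_field_mean A n x)\<bar>"
      using tanh_lip[of "\<beta> * loc_field A n x j + B" "\<beta> * loc_field_mean A n x + B"] by (simp add: algebra_simps)
    then have "\<bar>tanh (\<beta> * loc_field A n x j + B) - tanh (\<beta> * loc_field_mean A n x + B)\<bar>^2 \<le>
          \<bar>\<beta> * (loc_field A n x j - loc_field_mean A n x)\<bar>^2"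
      by (intro power_mono) auto
    then show "(tanh (\<beta> * loc_field A n x j + B) - tanh (\<beta> * loc_field_mean A n x + B))^2 \<le>
          \<beta>^2 * (loc_field A n x j - loc_field_mean A n x)^2"
      by (simp add: power_mult_distrib)
  qed
  also have "\<dots> = \<beta>^2 * (real n * T_stat A n x)"
    by (simp only: sum_distrib_left[symmetric] T_eq[OF assms])
  finally show ?thesis .
qed


lemma det_main:
  assumes n: "n > 0" and x: "x \<in> configs n" and bpos: "\<beta> > 0"
    and Tle: "T_stat A n x \<le> \<delta>" and \<delta>0: "\<delta> \<ge> 0" and \<eta>0: "\<eta> \<ge> 0"
    and Dle: "(\<Sum>i<n. (\<Sum>j<n. A n i j * (x j - tanh (\<beta> * loc_field A n x j + B)))^2) \<le> \<eta> * real n"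
    and Fle: "(\<Sum>j<n. row_sum A n j * (x j - tanh (\<beta> * loc_field A n x j + B)))^2 \<le> (\<eta> * real n)^2"
    and Vge: "(\<Sum>i<n. (row_sum A n i - row_sum_mean A n)^2) / real n \<ge> v0"
    and K1: "2 * \<gamma>^2 * \<beta>^2 * \<delta> + 2 * \<eta>^2 \<le> (\<bar>tanh B\<bar> / (2 * \<beta>))^2"
    and K2: "4 * (\<delta> * (1 + 3 * \<gamma>^2 * \<beta>^2) + \<eta> + 2 * \<eta>^2) < (\<bar>tanh B\<bar> / (2 * (1 + \<beta> * \<gamma>)))^2 * v0"
  shows False
proof -
  define m where "m i = loc_field A n x i" for i
  define c where "c = loc_field_mean A n x"
  define t where "t = tanh (\<beta> * c + B)"
  define tj where "tj j = tanh (\<beta> * m j + B)" for j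
  define R where "R i = row_sum A n i" for i
  define Rb where "Rb = row_sum_mean A n"
  define T where "T = T_stat A n x"
  define F where "F = (\<Sum>j<n. R j * (x j - tj j))"
  define e where "e i = (\<Sum>j<n. A n i j * (x j - tj j))" for i
  define g where "g i = (\<Sum>j<n. A n i j * (tj j - t))" for i
  define \<tau> where "\<tau> = \<bar>tanh B\<bar>"
  define V where "V = (\<Sum>i<n. (R i - Rb)^2) / real n"
  have nr: "real n > 0" using n by simp
  have T0: "T \<ge> 0" unfolding T_def T_stat_def by (intro divide_nonneg_pos sum_nonneg) (use nr in auto)
  have f1: "real n * c = (\<Sum>i<n. m i)" unfolding c_def m_def loc_field_mean_def using nr by simp
  have f2: "(\<Sum>i<n. m i) = (\<Sum>j<n. R j * x j)" unfolding m_def R_def by (rule sum_loc_field)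
  have f3: "(\<Sum>j<n. R j * x j) = (\<Sum>j<n. R j * tj j) + F"
    unfolding F_def by (simp add: sum.distrib[symmetric] algebra_simps)
  have f4: "(\<Sum>j<n. R j * tj j) = t * (\<Sum>j<n. R j) + (\<Sum>j<n. R j * (tj j - t))"
    by (simp add: sum.distrib[symmetric] sum_distrib_left algebra_simps)
  have f5: "(\<Sum>j<n. R j) = real n * Rb" unfolding Rb_def R_def row_sum_mean_def using nr by simp
  have f6: "real n * (c - t * Rb) = (\<Sum>j<n. R j * (tj j - t)) + F"
    using f1 f2 f3 f4 f5 by (simp add: algebra_simps)
  have tcb: "(\<Sum>j<n. (tj j - t)^2) \<le> \<beta>^2 * (real n * T)"
    unfolding tj_def t_def m_def c_def T_def by (rule tc_bound[OF n])
  have R0: "0 \<le> R i" "R i \<le> \<gamma>" if "i < n" for i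
    unfolding R_def using row_nonneg rowbd that by auto
  have f7: "(\<Sum>j<n. R j * (tj j - t))^2 \<le> (real n * \<gamma>^2) * (\<beta>^2 * (real n * T))"
  proof -
    have "(\<Sum>j<n. R j * (tj j - t))^2 \<le> (\<Sum>j<n. (R j)^2) * (\<Sum>j<n. (tj j - t)^2)"
      by (rule Cauchy_Schwarz_ineq_sum)
    also have "\<dots> \<le> (real n * \<gamma>^2) * (\<beta>^2 * (real n * T))"
    proof (rule mult_mono)
      have "(\<Sum>j<n. (R j)^2) \<le> (\<Sum>j<n. \<gamma>^2)" using R0 by (intro sum_mono power_mono) auto
      then show "(\<Sum>j<n. (R j)^2) \<le> real n * \<gamma>^2" by simp
    qed (use tcb in \<open>auto intro: sum_nonneg\<close>)
    finally show ?thesis .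
  qed
  have F2: "F^2 \<le> (\<eta> * real n)^2" using Fle unfolding F_def R_def tj_def m_def .
  have f8: "(real n * (c - t * Rb))^2 \<le> (real n)^2 * (2 * \<gamma>^2 * \<beta>^2 * \<delta> + 2 * \<eta>^2)"
  proof -
    have "(real n * (c - t * Rb))^2 \<le> 2 * ((\<Sum>j<n. R j * (tj j - t))^2 + F^2)"
      unfolding f6 by (rule sq2)
    also have "\<dots> \<le> 2 * ((real n * \<gamma>^2) * (\<beta>^2 * (real n * \<delta>)) + (\<eta> * real n)^2)"
    proof -
      have "(real n * \<gamma>^2) * (\<beta>^2 * (real n * T)) \<le> (real n * \<gamma>^2) * (\<beta>^2 * (real n * \<delta>))"
        using Tle nr unfolding T_def by (intro mult_left_mono) auto
      then have "(\<Sum>j<n. R j * (tj j - t))^2 \<le> (real n * \<gamma>^2) * (\<beta>^2 * (real n * \<delta>))"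
        using f7 by (rule order_trans[rotated])
      then show ?thesis using F2 by (intro mult_left_mono add_mono) auto
    qed
    also have "\<dots> = (real n)^2 * (2 * \<gamma>^2 * \<beta>^2 * \<delta> + 2 * \<eta>^2)"
      by (simp add: power2_eq_square algebra_simps)
    finally show ?thesis .
  qed
  have f9: "(c - t * Rb)^2 \<le> (\<tau> / (2 * \<beta>))^2"
  proof -
    have "(real n)^2 * (c - t * Rb)^2 \<le> (real n)^2 * (2 * \<gamma>^2 * \<beta>^2 * \<delta> + 2 * \<eta>^2)"
      using f8 by (simp add: power_mult_distrib)
    then have "(c - t * Rb)^2 \<le> 2 * \<gamma>^2 * \<beta>^2 * \<delta> + 2 * \<eta>^2" using nr by simp
    then show ?thesis using K1 unfolding \<tau>_def by linarith
  qed
  have f10: "\<bar>c - t * Rb\<bar> \<le> \<tau> / (2 * \<beta>)"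
    using f9 bpos unfolding \<tau>_def by (simp add: power2_le_iff_abs_le)
  have Rb0: "0 \<le> Rb" "Rb \<le> \<gamma>"
  proof -
    have "0 \<le> (\<Sum>j<n. R j)" using R0 by (intro sum_nonneg) auto
    then show "0 \<le> Rb" using f5 nr by (simp add: zero_le_mult_iff)
    have "(\<Sum>j<n. R j) \<le> (\<Sum>j<n. \<gamma>)" using R0 by (intro sum_mono) auto
    then show "Rb \<le> \<gamma>" using f5 nr by simp
  qed
  have f11: "\<bar>c\<bar> \<le> \<bar>t\<bar> * \<gamma> + \<tau> / (2 * \<beta>)"
  proof -
    have "\<bar>t * Rb\<bar> \<le> \<bar>t\<bar> * \<gamma>" using Rb0 by (simp add: abs_mult mult_left_mono)
    then show ?thesis using f10 by linarith
  qed
  have f12: "\<tau> \<le> \<bar>t\<bar> + \<beta> * \<bar>c\<bar>"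
  proof -
    have "\<bar>tanh (\<beta> * c + B) - tanh B\<bar> \<le> \<bar>\<beta> * c\<bar>" using tanh_lip[of "\<beta> * c + B" B] by simp
    then show ?thesis unfolding \<tau>_def t_def using bpos by (simp add: abs_mult)
  qed
  have f13: "\<beta> * \<bar>c\<bar> \<le> \<beta> * \<gamma> * \<bar>t\<bar> + \<tau> / 2"
  proof -
    have "\<beta> * \<bar>c\<bar> \<le> \<beta> * (\<bar>t\<bar> * \<gamma> + \<tau> / (2 * \<beta>))" using f11 bpos by (intro mult_left_mono) auto
    then show ?thesis using bpos by (simp add: algebra_simps)
  qed
  have t0: "\<tau> / (2 * (1 + \<beta> * \<gamma>)) \<le> \<bar>t\<bar>"
  proof -
    have "\<tau> / 2 \<le> \<bar>t\<bar> * (1 + \<beta> * \<gamma>)" using f12 f13 by (simp add: algebra_simps)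
    moreover have "1 + \<beta> * \<gamma> > 0" using bpos gam by (simp add: add_pos_nonneg)
    ultimately show ?thesis by (simp add: divide_le_eq algebra_simps)
  qed
  have t02: "(\<tau> / (2 * (1 + \<beta> * \<gamma>)))^2 \<le> t^2"
  proof -
    have "0 \<le> \<tau> / (2 * (1 + \<beta> * \<gamma>))" unfolding \<tau>_def using bpos gam by simp
    then show ?thesis using t0 by (metis abs_le_square_iff abs_of_nonneg)
  qed
  have f14: "m i = t * R i + g i + e i" if i: "i < n" for i
  proof -
    have "m i = (\<Sum>j<n. A n i j * t + A n i j * (tj j - t) + A n i j * (x j - tj j))"
      unfolding m_def loc_field_def by (intro sum.cong) (auto simp: algebra_simps)
    also have "\<dots> = (\<Sum>j<n. A n i j * t) + (\<Sum>j<n. A n i j * (tj j - t)) + (\<Sum>j<n. A n i j * (x j - tj j))"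
      by (simp only: sum.distrib)
    also have "\<dots> = t * R i + g i + e i"
      unfolding R_def row_sum_def g_def e_def by (simp add: sum_distrib_left mult.commute)
    finally show ?thesis .
  qed
  have gsum: "(\<Sum>i<n. (g i)^2) \<le> \<gamma>^2 * (\<beta>^2 * (real n * T))"
  proof -
    have "(\<Sum>i<n. (g i)^2) \<le> \<gamma>^2 * (\<Sum>j<n. (tj j - t)^2)" unfolding g_def by (rule g_bound)
    also have "\<dots> \<le> \<gamma>^2 * (\<beta>^2 * (real n * T))" using tcb by (intro mult_left_mono) auto
    finally show ?thesis .
  qed
  have Dsum: "(\<Sum>i<n. (e i)^2) \<le> \<eta> * real n" using Dle unfolding e_def tj_def m_def .
  have msum: "(\<Sum>i<n. (m i - c)^2) = real n * T" unfolding m_def c_def T_def by (rule T_eq[OF n])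
  have f15: "t^2 * (real n * V) \<le> 4 * ((\<Sum>i<n. (m i - c)^2) + (\<Sum>i<n. (g i)^2) + (\<Sum>i<n. (e i)^2) + real n * (c - t * Rb)^2)"
  proof -
    have nV: "real n * V = (\<Sum>i<n. (R i - Rb)^2)" unfolding V_def using nr by simp
    have "t^2 * (real n * V) = (\<Sum>i<n. (t * (R i - Rb))^2)"
      unfolding nV by (simp add: sum_distrib_left power_mult_distrib)
    also have "\<dots> \<le> (\<Sum>i<n. 4 * ((m i - c)^2 + (- g i)^2 + (- e i)^2 + (c - t * Rb)^2))"
    proof (intro sum_mono)
      fix i assume "i \<in> {..<n}"
      then have "t * (R i - Rb) = (m i - c) + (- g i) + (- e i) + (c - t * Rb)" using f14[of i] by (simp add: algebra_simps)
      then show "(t * (R i - Rb))^2 \<le> 4 * ((m i - c)^2 + (- g i)^2 + (- e i)^2 + (c - t * Rb)^2)"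
        using sq4 by metis
    qed
    also have "\<dots> = 4 * ((\<Sum>i<n. (m i - c)^2) + (\<Sum>i<n. (g i)^2) + (\<Sum>i<n. (e i)^2) + real n * (c - t * Rb)^2)"
      by (simp add: sum.distrib sum_distrib_left)
    finally show ?thesis .
  qed
  have f16: "t^2 * V \<le> 4 * (\<delta> * (1 + 3 * \<gamma>^2 * \<beta>^2) + \<eta> + 2 * \<eta>^2)"
  proof -
    have a1: "real n * T \<le> real n * \<delta>" using Tle nr unfolding T_def by simp
    have a2: "\<gamma>^2 * (\<beta>^2 * (real n * T)) \<le> \<gamma>^2 * (\<beta>^2 * (real n * \<delta>))"
      using Tle nr unfolding T_def by (intro mult_left_mono) auto
    have a3: "(c - t * Rb)^2 \<le> 2 * \<gamma>^2 * \<beta>^2 * \<delta> + 2 * \<eta>^2"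
    proof -
      have "(real n)^2 * (c - t * Rb)^2 \<le> (real n)^2 * (2 * \<gamma>^2 * \<beta>^2 * \<delta> + 2 * \<eta>^2)"
        using f8 by (simp add: power_mult_distrib)
      then show ?thesis using nr by simp
    qed
    have a4: "real n * (c - t * Rb)^2 \<le> real n * (2 * \<gamma>^2 * \<beta>^2 * \<delta> + 2 * \<eta>^2)"
      using a3 nr by (intro mult_left_mono) auto
    have "t^2 * (real n * V) \<le> 4 * (real n * \<delta> + \<gamma>^2 * (\<beta>^2 * (real n * \<delta>)) + \<eta> * real n + real n * (2 * \<gamma>^2 * \<beta>^2 * \<delta> + 2 * \<eta>^2))"
    proof -
      have b1: "(\<Sum>i<n. (m i - c)^2) \<le> real n * \<delta>" using msum a1 by simp
      have b2: "(\<Sum>i<n. (g i)^2) \<le> \<gamma>^2 * (\<beta>^2 * (real n * \<delta>))" using gsum a2 by (rule order_trans)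
      have "4 * ((\<Sum>i<n. (m i - c)^2) + (\<Sum>i<n. (g i)^2) + (\<Sum>i<n. (e i)^2) + real n * (c - t * Rb)^2)
        \<le> 4 * (real n * \<delta> + \<gamma>^2 * (\<beta>^2 * (real n * \<delta>)) + \<eta> * real n + real n * (2 * \<gamma>^2 * \<beta>^2 * \<delta> + 2 * \<eta>^2))"
        by (rule mult_left_mono, (rule add_mono)+) (use b1 b2 Dsum a4 in auto)
      then show ?thesis using f15 by (rule order_trans[rotated])
    qed
    also have "\<dots> = real n * (4 * (\<delta> * (1 + 3 * \<gamma>^2 * \<beta>^2) + \<eta> + 2 * \<eta>^2))"
      by (simp add: algebra_simps)
    finally have "real n * (t^2 * V) \<le> real n * (4 * (\<delta> * (1 + 3 * \<gamma>^2 * \<beta>^2) + \<eta> + 2 * \<eta>^2))"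
      by (simp add: algebra_simps)
    then show ?thesis using nr by simp
  qed
  have v0pos: "v0 > 0"
  proof -
    have "0 \<le> 4 * (\<delta> * (1 + 3 * \<gamma>^2 * \<beta>^2) + \<eta> + 2 * \<eta>^2)" using \<delta>0 \<eta>0 by simp
    then have "0 < (\<bar>tanh B\<bar> / (2 * (1 + \<beta> * \<gamma>)))^2 * v0" using K2 by linarith
    then show ?thesis by (simp add: zero_less_mult_iff)
  qed
  have "(\<tau> / (2 * (1 + \<beta> * \<gamma>)))^2 * v0 \<le> t^2 * V"
    using t02 Vge v0pos unfolding V_def R_def Rb_def by (intro mult_mono) auto
  then show False using f16 K2 unfolding \<tau>_def by linarith
qed

end




definition Gr1 :: "nat \<Rightarrow> (nat \<Rightarrow> real) \<Rightarrow> (nat \<Rightarrow> real) \<Rightarrow> real \<times> real \<Rightarrow> real" where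
  "Gr1 n m x p = (\<Sum>i<n. m i * (x i - tanh (fst p * m i + snd p)))"

definition Gr2 :: "nat \<Rightarrow> (nat \<Rightarrow> real) \<Rightarrow> (nat \<Rightarrow> real) \<Rightarrow> real \<times> real \<Rightarrow> real" where
  "Gr2 n m x p = (\<Sum>i<n. x i - tanh (fst p * m i + snd p))"

definition Lf :: "nat \<Rightarrow> (nat \<Rightarrow> real) \<Rightarrow> (nat \<Rightarrow> real) \<Rightarrow> real \<times> real \<Rightarrow> real" where
  "Lf n m x p = (\<Sum>i<n. x i * (fst p * m i + snd p) - ln (cosh (fst p * m i + snd p)))"

lemma le_by_diff: "X - Y = Z \<Longrightarrow> 0 \<le> Z \<Longrightarrow> Y \<le> (X::real)" by linarith

lemma Q_lower:
  fixes m :: "nat \<Rightarrow> real"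
  assumes n: "n > 0" and Tp: "0 \<le> Tp" "Tp \<le> 1" "Tp \<le> (\<Sum>i<n. (m i - (\<Sum>j<n. m j) / n)^2) / n"
    and C2: "((\<Sum>j<n. m j) / n)^2 \<le> C2"
  shows "real n * Tp / (2 + 2 * C2) * (u1^2 + u2^2) \<le> (\<Sum>i<n. (u1 * m i + u2)^2)"
proof -
  define c where "c = (\<Sum>j<n. m j) / n"
  define v where "v = u1 * c + u2"
  have nr: "real n > 0" using n by simp
  have C20: "C2 \<ge> 0" by (rule order_trans[OF zero_le_power2 C2])
  have sc: "(\<Sum>i<n. (m i - c)) = 0" unfolding c_def using nr by (simp add: sum_subtractf)
  have "(\<Sum>i<n. (u1 * m i + u2)^2) = (\<Sum>i<n. u1^2 * (m i - c)^2 + 2 * u1 * v * (m i - c) + v^2)"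
    unfolding v_def by (intro sum.cong refl) (simp add: power2_eq_square algebra_simps)
  also have "\<dots> = u1^2 * (\<Sum>i<n. (m i - c)^2) + 2 * u1 * v * (\<Sum>i<n. (m i - c)) + real n * v^2"
    by (simp add: sum.distrib sum_distrib_left)
  also have "\<dots> = real n * (u1^2 * ((\<Sum>i<n. (m i - c)^2) / n) + v^2)"
    using sc nr by (simp add: algebra_simps)
  finally have e: "(\<Sum>i<n. (u1 * m i + u2)^2) = real n * (u1^2 * ((\<Sum>i<n. (m i - c)^2) / n) + v^2)" .
  have k1: "Tp * (u1^2 + v^2) \<le> u1^2 * ((\<Sum>i<n. (m i - c)^2) / n) + v^2"
  proof -
    have "Tp * u1^2 \<le> ((\<Sum>i<n. (m i - c)^2) / n) * u1^2" using Tp unfolding c_def by (intro mult_right_mono) auto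
    moreover have "Tp * v^2 \<le> v^2" using Tp by (simp add: mult_left_le_one_le)
    ultimately show ?thesis by (simp add: algebra_simps)
  qed
  have k2: "u1^2 + u2^2 \<le> (2 + 2 * C2) * (u1^2 + v^2)"
  proof -
    have "u2 = v - u1 * c" unfolding v_def by simp
    then have a: "u2^2 \<le> 2 * (v^2 + (u1 * c)^2)" using sq2[of v "- u1 * c"] by simp
    have b: "(u1 * c)^2 \<le> u1^2 * C2"
    proof -
      have "u1^2 * c^2 \<le> u1^2 * C2" using C2 unfolding c_def by (intro mult_left_mono) auto
      then show ?thesis by (simp add: power_mult_distrib)
    qed
    have "2 * (v^2 + (u1 * c)^2) \<le> 2 * (v^2 + u1^2 * C2)" using b by simp
    with a have "u2^2 \<le> 2 * (v^2 + u1^2 * C2)" by (rule order_trans)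
    moreover have "(2 + 2 * C2) * (u1^2 + v^2) - (u1^2 + 2 * (v^2 + u1^2 * C2)) = u1^2 + 2 * (C2 * v^2)"
      by (simp add: algebra_simps)
    then have "u1^2 + 2 * (v^2 + u1^2 * C2) \<le> (2 + 2 * C2) * (u1^2 + v^2)"
      by (rule le_by_diff) (use C20 in simp)
    ultimately show ?thesis by linarith
  qed
  have "Tp / (2 + 2 * C2) * (u1^2 + u2^2) \<le> Tp / (2 + 2 * C2) * ((2 + 2 * C2) * (u1^2 + v^2))"
    by (rule mult_left_mono[OF k2]) (use Tp C20 in simp)
  also have "\<dots> = Tp * (u1^2 + v^2)" using C20 by simp
  also have "\<dots> \<le> u1^2 * ((\<Sum>i<n. (m i - c)^2) / n) + v^2" by (rule k1)
  finally have k: "Tp / (2 + 2 * C2) * (u1^2 + u2^2) \<le> u1^2 * ((\<Sum>i<n. (m i - c)^2) / n) + v^2" .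
  have "real n * (Tp / (2 + 2 * C2) * (u1^2 + u2^2)) \<le> real n * (u1^2 * ((\<Sum>i<n. (m i - c)^2) / n) + v^2)"
    by (rule mult_left_mono[OF k]) (use nr in simp)
  moreover have "real n * Tp / (2 + 2 * C2) * (u1^2 + u2^2) = real n * (Tp / (2 + 2 * C2) * (u1^2 + u2^2))"
    by simp
  ultimately show ?thesis unfolding e by simp
qed

lemma L_diff:
  fixes m x :: "nat \<Rightarrow> real" and p p0 :: "real \<times> real"
  assumes "\<And>i. i < n \<Longrightarrow> \<bar>fst p0 * m i + snd p0\<bar> \<le> M"
    and "\<And>i. i < n \<Longrightarrow> \<bar>fst p * m i + snd p\<bar> \<le> M"
  shows "Lf n m x p - Lf n m x p0 \<le> (fst p - fst p0) * Gr1 n m x p0 + (snd p - snd p0) * Gr2 n m x p0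
           - (1 - tanh M ^ 2) / 2 * (\<Sum>i<n. ((fst p - fst p0) * m i + (snd p - snd p0))^2)"
proof -
  define z where "z i = fst p0 * m i + snd p0" for i
  define w where "w i = (fst p - fst p0) * m i + (snd p - snd p0)" for i
  define cs where "cs = 1 - tanh M ^ 2"
  have zw: "fst p * m i + snd p = z i + w i" for i unfolding z_def w_def by (simp add: algebra_simps)
  have "Lf n m x p - Lf n m x p0 = (\<Sum>i<n. x i * w i - (ln (cosh (z i + w i)) - ln (cosh (z i))))"
    unfolding Lf_def zw z_def[symmetric] by (simp add: sum_subtractf[symmetric] algebra_simps)
  also have "\<dots> \<le> (\<Sum>i<n. w i * (x i - tanh (z i)) - cs / 2 * (w i)^2)"
  proof (intro sum_mono)
    fix i assume i: "i \<in> {..<n}"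
    have "tanh (z i) * w i + cs / 2 * (w i)^2 \<le> ln (cosh (z i + w i)) - ln (cosh (z i))"
    proof -
      have h1: "\<bar>z i\<bar> \<le> M" using assms(1)[of i] i by (simp add: z_def)
      have h2: "\<bar>z i + w i\<bar> \<le> M" using assms(2)[of i] i unfolding zw by simp
      show ?thesis unfolding cs_def by (rule lncosh_strong[OF h1 h2])
    qed
    then show "x i * w i - (ln (cosh (z i + w i)) - ln (cosh (z i))) \<le> w i * (x i - tanh (z i)) - cs / 2 * (w i)^2"
      by (simp add: algebra_simps)
  qed
  also have "\<dots> = (fst p - fst p0) * Gr1 n m x p0 + (snd p - snd p0) * Gr2 n m x p0 - cs / 2 * (\<Sum>i<n. (w i)^2)"
    unfolding Gr1_def Gr2_def w_def z_def
    by (simp add: sum_subtractf sum.distrib sum_distrib_left algebra_simps)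
  finally show ?thesis unfolding cs_def w_def .
qed




lemma Lf_dir_deriv:
  "((\<lambda>s. Lf n m x (fst q + s * a, snd q + s * b)) has_real_derivative
     (\<Sum>i<n. x i * (a * m i + b) - tanh (fst q * m i + snd q) * (a * m i + b))) (at 0)"
proof -
  define z where "z i = fst q * m i + snd q" for i
  define w where "w i = a * m i + b" for i
  have e: "(\<lambda>s. Lf n m x (fst q + s * a, snd q + s * b)) = (\<lambda>s. \<Sum>i<n. x i * (z i + s * w i) - ln (cosh (z i + s * w i)))"
    unfolding Lf_def z_def w_def by (intro ext sum.cong) (auto simp: algebra_simps)
  have "((\<lambda>s. \<Sum>i<n. x i * (z i + s * w i) - ln (cosh (z i + s * w i))) has_real_derivative
     (\<Sum>i<n. x i * w i - tanh (z i + 0 * w i) * w i)) (at 0)"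
  proof (rule DERIV_sum)
    fix i
    have l: "((\<lambda>s. x i * (z i + s * w i)) has_real_derivative x i * w i) (at 0)"
      by (auto intro!: derivative_eq_intros)
    show "((\<lambda>s. x i * (z i + s * w i) - ln (cosh (z i + s * w i))) has_real_derivative
          x i * w i - tanh (z i + 0 * w i) * w i) (at 0)"
      by (rule DERIV_diff[OF l DERIV_lncosh])
  qed
  then show ?thesis unfolding e z_def w_def by simp
qed

lemma root_of_local_max:
  assumes d: "d > 0" and mx: "\<And>p. dist p q < d \<Longrightarrow> Lf n m x p \<le> Lf n m x q"
  shows "Gr1 n m x q = 0 \<and> Gr2 n m x q = 0"
proof
  have "(\<Sum>i<n. x i * (1 * m i + 0) - tanh (fst q * m i + snd q) * (1 * m i + 0)) = 0"
  proof (rule DERIV_local_max[OF Lf_dir_deriv d])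
    show "\<forall>y. \<bar>0 - y\<bar> < d \<longrightarrow> Lf n m x (fst q + y * 1, snd q + y * 0) \<le> Lf n m x (fst q + 0 * 1, snd q + 0 * 0)"
    proof (intro allI impI)
      fix y :: real assume "\<bar>0 - y\<bar> < d"
      moreover have "dist (fst q + y * 1, snd q + y * 0) q = \<bar>y\<bar>"
        by (cases q) (simp add: dist_Pair_Pair dist_real_def)
      ultimately show "Lf n m x (fst q + y * 1, snd q + y * 0) \<le> Lf n m x (fst q + 0 * 1, snd q + 0 * 0)"
        using mx[of "(fst q + y * 1, snd q + y * 0)"] by simp
    qed
  qed
  then show "Gr1 n m x q = 0" unfolding Gr1_def by (simp add: algebra_simps sum_subtractf)
next
  have "(\<Sum>i<n. x i * (0 * m i + 1) - tanh (fst q * m i + snd q) * (0 * m i + 1)) = 0"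
  proof (rule DERIV_local_max[OF Lf_dir_deriv d])
    show "\<forall>y. \<bar>0 - y\<bar> < d \<longrightarrow> Lf n m x (fst q + y * 0, snd q + y * 1) \<le> Lf n m x (fst q + 0 * 0, snd q + 0 * 1)"
    proof (intro allI impI)
      fix y :: real assume "\<bar>0 - y\<bar> < d"
      moreover have "dist (fst q + y * 0, snd q + y * 1) q = \<bar>y\<bar>"
        by (cases q) (simp add: dist_Pair_Pair dist_real_def)
      ultimately show "Lf n m x (fst q + y * 0, snd q + y * 1) \<le> Lf n m x (fst q + 0 * 0, snd q + 0 * 1)"
        using mx[of "(fst q + y * 0, snd q + y * 1)"] by simp
    qed
  qed
  then show "Gr2 n m x q = 0" unfolding Gr2_def by simp
qed

lemma root_unique:
  fixes m :: "nat \<Rightarrow> real"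
  assumes n: "n > 0" and Tp: "0 < Tp" "Tp \<le> 1" "Tp \<le> (\<Sum>i<n. (m i - (\<Sum>j<n. m j) / n)^2) / n"
    and C2: "((\<Sum>j<n. m j) / n)^2 \<le> C2"
    and p: "Gr1 n m x p = 0" "Gr2 n m x p = 0" and q: "Gr1 n m x q = 0" "Gr2 n m x q = 0"
  shows "p = q"
proof -
  define u1 where "u1 = fst q - fst p"
  define u2 where "u2 = snd q - snd p"
  define zp where "zp i = fst p * m i + snd p" for i
  define w where "w i = u1 * m i + u2" for i
  have zq: "fst q * m i + snd q = zp i + w i" for i unfolding zp_def w_def u1_def u2_def by (simp add: algebra_simps)
  have "(\<Sum>i<n. (tanh (zp i + w i) - tanh (zp i)) * w i) =
        u1 * (Gr1 n m x p - Gr1 n m x q) + u2 * (Gr2 n m x p - Gr2 n m x q)"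
    unfolding Gr1_def Gr2_def zq zp_def[symmetric] w_def
    by (simp add: sum_subtractf[symmetric] sum_distrib_left sum.distrib[symmetric] algebra_simps)
  also have "\<dots> = 0" using p q by simp
  finally have s0: "(\<Sum>i<n. (tanh (zp i + w i) - tanh (zp i)) * w i) = 0" .
  have nn: "0 \<le> (tanh (zp i + w i) - tanh (zp i)) * w i" for i
    using tanh_prod_nonneg[of "zp i + w i" "zp i"] by simp
  have "\<forall>i\<in>{..<n}. (tanh (zp i + w i) - tanh (zp i)) * w i = 0"
    using s0 nn by (subst sum_nonneg_eq_0_iff[symmetric]) auto
  then have w0: "w i = 0" if "i < n" for i
    using tanh_prod_pos[of "zp i + w i" "zp i"] that by (cases "w i = 0") auto
  have C20: "C2 \<ge> 0" by (rule order_trans[OF zero_le_power2 C2])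
  have "real n * Tp / (2 + 2 * C2) * (u1^2 + u2^2) \<le> (\<Sum>i<n. (u1 * m i + u2)^2)"
    by (rule Q_lower[OF n _ Tp(2,3) C2]) (use Tp in simp)
  also have "\<dots> = 0" using w0 unfolding w_def by simp
  finally have "real n * Tp / (2 + 2 * C2) * (u1^2 + u2^2) \<le> 0" .
  moreover have "real n * Tp / (2 + 2 * C2) > 0" using n Tp C20 by simp
  ultimately have "u1^2 + u2^2 \<le> 0"
    by (metis linorder_not_le mult_pos_pos add_nonneg_nonneg zero_le_power2 order.not_eq_order_implies_strict)
  then have "u1 = 0 \<and> u2 = 0" by (simp add: sum_power2_le_zero_iff)
  then have "u1 = 0" "u2 = 0" by auto
  then show ?thesis unfolding u1_def u2_def by (simp add: prod_eq_iff)
qed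




lemma Lf_cont: "continuous_on S (Lf n m x)"
  unfolding Lf_def
  by (intro continuous_intros) (auto simp: cosh_real_pos[THEN less_imp_neq, symmetric])

lemma cs2d: "u1 * g1 + u2 * g2 \<le> sqrt (u1^2 + u2^2) * sqrt (g1^2 + (g2::real)^2)"
proof -
  have "(u1 * g1 + u2 * g2)^2 \<le> (u1^2 + u2^2) * (g1^2 + g2^2)"
  proof -
    have "0 \<le> (u1 * g2 - u2 * g1)^2" by simp
    then show ?thesis by (simp add: power2_eq_square algebra_simps)
  qed
  then have "sqrt ((u1 * g1 + u2 * g2)^2) \<le> sqrt ((u1^2 + u2^2) * (g1^2 + g2^2))"
    by (rule real_sqrt_le_mono)
  then have "\<bar>u1 * g1 + u2 * g2\<bar> \<le> sqrt (u1^2 + u2^2) * sqrt (g1^2 + g2^2)"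
    by (simp add: real_sqrt_mult)
  then show ?thesis by linarith
qed


lemma root_exists:
  fixes m x :: "nat \<Rightarrow> real" and p0 :: "real \<times> real"
  assumes n: "n > 0" and mbd: "\<And>i. i < n \<Longrightarrow> \<bar>m i\<bar> \<le> \<gamma>"
    and Tp: "0 < Tp" "Tp \<le> 1" "Tp \<le> (\<Sum>i<n. (m i - (\<Sum>j<n. m j) / n)^2) / n"
    and C2: "((\<Sum>j<n. m j) / n)^2 \<le> C2"
    and r: "0 < r" "r \<le> 1"
    and M: "M = (\<bar>fst p0\<bar> + 1) * \<gamma> + \<bar>snd p0\<bar> + 1"
    and big: "sqrt ((Gr1 n m x p0)^2 + (Gr2 n m x p0)^2) < (1 - tanh M ^ 2) / 2 * (real n * Tp / (2 + 2 * C2)) * r"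
  shows "\<exists>q. Gr1 n m x q = 0 \<and> Gr2 n m x q = 0 \<and> dist q p0 < r"
proof -
  define K where "K = cball p0 r"
  define g where "g = sqrt ((Gr1 n m x p0)^2 + (Gr2 n m x p0)^2)"
  define lam where "lam = real n * Tp / (2 + 2 * C2)"
  define cs where "cs = 1 - tanh M ^ 2"
  have gam: "\<gamma> \<ge> 0" using mbd[of 0] n by auto
  have cK: "compact K" unfolding K_def by simp
  have neK: "K \<noteq> {}" unfolding K_def using r by auto
  obtain q where qK: "q \<in> K" and qmax: "\<And>p. p \<in> K \<Longrightarrow> Lf n m x p \<le> Lf n m x q"
    using continuous_attains_sup[OF cK neK Lf_cont[of K n m x]] by auto
  have sphere: "Lf n m x p < Lf n m x p0" if dp: "dist p0 p = r" for p
  proof -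
    define u1 where "u1 = fst p - fst p0"
    define u2 where "u2 = snd p - snd p0"
    have u: "u1^2 + u2^2 = r^2"
    proof -
      have "dist p0 p = sqrt (u1^2 + u2^2)" unfolding u1_def u2_def
        by (cases p0, cases p) (simp add: dist_Pair_Pair dist_real_def power2_commute)
      then have "sqrt (u1^2 + u2^2) = r" using dp by simp
      then have "(sqrt (u1^2 + u2^2))^2 = r^2" by simp
      then show ?thesis by simp
    qed
    have u1b: "\<bar>u1\<bar> \<le> r" using dist_fst_le[of p0 p] dp unfolding u1_def dist_real_def by (simp add: abs_minus_commute)
    have u2b: "\<bar>u2\<bar> \<le> r" using dist_snd_le[of p0 p] dp unfolding u2_def dist_real_def by (simp add: abs_minus_commute)
    have b0: "\<bar>fst p0 * m i + snd p0\<bar> \<le> M" if i: "i < n" for i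
    proof -
      have "\<bar>fst p0 * m i + snd p0\<bar> \<le> \<bar>fst p0\<bar> * \<gamma> + \<bar>snd p0\<bar>"
      proof -
        have "\<bar>fst p0 * m i\<bar> \<le> \<bar>fst p0\<bar> * \<gamma>" unfolding abs_mult using mbd[OF i] by (intro mult_left_mono) auto
        then show ?thesis using abs_triangle_ineq[of "fst p0 * m i" "snd p0"] by linarith
      qed
      also have "\<dots> \<le> M" unfolding M using gam by (simp add: algebra_simps)
      finally show ?thesis .
    qed
    have b1: "\<bar>fst p * m i + snd p\<bar> \<le> M" if i: "i < n" for i
    proof -
      have e: "fst p * m i + snd p = (fst p0 + u1) * m i + (snd p0 + u2)" unfolding u1_def u2_def by simp
      have "\<bar>(fst p0 + u1) * m i\<bar> \<le> (\<bar>fst p0\<bar> + 1) * \<gamma>"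
      proof -
        have "\<bar>fst p0 + u1\<bar> \<le> \<bar>fst p0\<bar> + 1" using u1b r by linarith
        then show ?thesis unfolding abs_mult using mbd[OF i] by (intro mult_mono) auto
      qed
      moreover have "\<bar>snd p0 + u2\<bar> \<le> \<bar>snd p0\<bar> + 1" using u2b r by linarith
      ultimately show ?thesis unfolding e M by linarith
    qed
    have "Lf n m x p - Lf n m x p0 \<le> u1 * Gr1 n m x p0 + u2 * Gr2 n m x p0 - cs / 2 * (\<Sum>i<n. (u1 * m i + u2)^2)"
      unfolding u1_def u2_def cs_def by (rule L_diff) (auto simp: b0 b1)
    also have "\<dots> \<le> r * g - cs / 2 * (lam * r^2)"
    proof -
      have "u1 * Gr1 n m x p0 + u2 * Gr2 n m x p0 \<le> sqrt (u1^2 + u2^2) * g" unfolding g_def by (rule cs2d)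
      also have "\<dots> = r * g" using u r by simp
      finally have a: "u1 * Gr1 n m x p0 + u2 * Gr2 n m x p0 \<le> r * g" .
      have "lam * (u1^2 + u2^2) \<le> (\<Sum>i<n. (u1 * m i + u2)^2)"
        unfolding lam_def by (rule Q_lower[OF n _ Tp(2,3) C2]) (use Tp in simp)
      then have "lam * r^2 \<le> (\<Sum>i<n. (u1 * m i + u2)^2)" using u by simp
      moreover have "cs \<ge> 0"
      proof -
        have "\<bar>tanh M\<bar> \<le> 1" using tanh_real_bounds[of M] by auto
        then show ?thesis unfolding cs_def by (simp add: abs_square_le_1)
      qed
      ultimately have "cs / 2 * (lam * r^2) \<le> cs / 2 * (\<Sum>i<n. (u1 * m i + u2)^2)"
        by (intro mult_left_mono) auto
      then show ?thesis using a by linarith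
    qed
    also have "\<dots> = r * (g - cs / 2 * lam * r)" by (simp add: power2_eq_square algebra_simps)
    also have "\<dots> < 0"
    proof -
      have "g < cs / 2 * lam * r" using big unfolding g_def cs_def lam_def .
      then show ?thesis using r by (simp add: mult_pos_neg)
    qed
    finally show ?thesis by simp
  qed
  have p0K: "p0 \<in> K" unfolding K_def using r by simp
  have dq: "dist p0 q < r"
  proof -
    have "dist p0 q \<le> r" using qK unfolding K_def by simp
    moreover have "dist p0 q \<noteq> r" using sphere[of q] qmax[OF p0K] by auto
    ultimately show ?thesis by simp
  qed
  have "Gr1 n m x q = 0 \<and> Gr2 n m x q = 0"
  proof (rule root_of_local_max)
    show "r - dist p0 q > 0" using dq by simp
    fix p assume "dist p q < r - dist p0 q"
    then have "dist p0 p < r" using dist_triangle[of p0 p q] dist_commute[of p q] by linarith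
    then show "Lf n m x p \<le> Lf n m x q" using qmax unfolding K_def by simp
  qed
  moreover have "dist q p0 < r" using dq by (simp add: dist_commute)
  ultimately show ?thesis by blast
qed




lemma pl_root_Gr: "pl_root A n x p \<longleftrightarrow> Gr1 n (loc_field A n x) x p = 0 \<and> Gr2 n (loc_field A n x) x p = 0"
  unfolding pl_root_def Gr1_def Gr2_def by simp

lemma T_stat_alt: "T_stat A n x = (\<Sum>i<n. (loc_field A n x i - (\<Sum>j<n. loc_field A n x j) / n)^2) / n"
  unfolding T_stat_def loc_field_mean_def by simp

context ising_n
begin

lemma mean_bd: "x \<in> configs n \<Longrightarrow> n > 0 \<Longrightarrow> \<bar>loc_field_mean A n x\<bar> \<le> \<gamma>"
proof -
  assume x: "x \<in> configs n" and n: "n > 0"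
  have "\<bar>\<Sum>i<n. loc_field A n x i\<bar> \<le> (\<Sum>i<n. \<bar>loc_field A n x i\<bar>)" by (rule sum_abs)
  also have "\<dots> \<le> (\<Sum>i<n. \<gamma>)" using loc_field_bd[OF x] by (intro sum_mono) auto
  finally have "\<bar>\<Sum>i<n. loc_field A n x i\<bar> \<le> real n * \<gamma>" by simp
  then show ?thesis unfolding loc_field_mean_def using n by (simp add: divide_le_eq mult.commute)
qed

lemma T_nonneg: "T_stat A n x \<ge> 0"
  unfolding T_stat_def by (intro divide_nonneg_nonneg sum_nonneg) auto

lemma T_le: "x \<in> configs n \<Longrightarrow> n > 0 \<Longrightarrow> T_stat A n x \<le> 4 * \<gamma>^2"
proof -
  assume x: "x \<in> configs n" and n: "n > 0"
  have "(\<Sum>i<n. (loc_field A n x i - loc_field_mean A n x)^2) \<le> (\<Sum>i<n. (2 * \<gamma>)^2)"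
  proof (intro sum_mono)
    fix i assume "i \<in> {..<n}"
    then have i: "i < n" by simp
    have "\<bar>loc_field A n x i - loc_field_mean A n x\<bar> \<le> \<bar>loc_field A n x i\<bar> + \<bar>loc_field_mean A n x\<bar>"
      by (rule abs_triangle_ineq4)
    then have "\<bar>loc_field A n x i - loc_field_mean A n x\<bar> \<le> 2 * \<gamma>"
      using loc_field_bd[OF x i] mean_bd[OF x n] by linarith
    then have "\<bar>loc_field A n x i - loc_field_mean A n x\<bar>^2 \<le> (2 * \<gamma>)^2" by (intro power_mono) auto
    then show "(loc_field A n x i - loc_field_mean A n x)^2 \<le> (2 * \<gamma>)^2" by simp
  qed
  then show ?thesis unfolding T_stat_def using n by (simp add: divide_le_eq power_mult_distrib mult.commute)
qed

lemma ple_good: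
  assumes n: "n > 0" and x: "x \<in> configs n" and bpos: "\<beta> > 0" and \<delta>: "\<delta> > 0"
    and T: "T_stat A n x > \<delta>" and K: "K > 0"
    and G: "(\<Sum>i<n. loc_field A n x i * (x i - tanh (\<beta> * loc_field A n x i + B)))^2
            + (\<Sum>i<n. x i - tanh (\<beta> * loc_field A n x i + B))^2 < K * real n"
    and kap: "\<kappa> = (1 - tanh ((\<beta> + 1) * \<gamma> + \<bar>B\<bar> + 1) ^ 2) / 2 * (min \<delta> 1 / (2 + 2 * \<gamma>^2))"
    and r1: "4 * K / (\<kappa>^2 * real n) \<le> 1"
  shows "ple_exists A n x \<and> (fst (ple A n x) - \<beta>)^2 + (snd (ple A n x) - B)^2 < 4 * K / (\<kappa>^2 * real n)"
proof -
  define m where "m = loc_field A n x"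
  define p0 where "p0 = (\<beta>, B)"
  define M where "M = (\<bar>fst p0\<bar> + 1) * \<gamma> + \<bar>snd p0\<bar> + 1"
  define Tp where "Tp = min \<delta> 1"
  define r where "r = sqrt (4 * K / (\<kappa>^2 * real n))"
  have nr: "real n > 0" using n by simp
  have M': "M = (\<beta> + 1) * \<gamma> + \<bar>B\<bar> + 1" unfolding M_def p0_def using bpos by simp
  have cs: "1 - tanh M ^ 2 > 0"
  proof -
    have "\<bar>tanh M\<bar> < 1" using tanh_real_bounds[of M] by auto
    then have "tanh M ^ 2 < 1" by (simp add: abs_square_less_1)
    then show ?thesis by simp
  qed
  have kpos: "\<kappa> > 0" unfolding kap M'[symmetric] using cs \<delta> by (intro mult_pos_pos divide_pos_pos) (auto simp: add_pos_nonneg)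
  have Tp: "0 < Tp" "Tp \<le> 1" "Tp \<le> (\<Sum>i<n. (m i - (\<Sum>j<n. m j) / n)^2) / n"
    unfolding Tp_def m_def using \<delta> T T_stat_alt[of A n x] by auto
  have C2: "((\<Sum>j<n. m j) / n)^2 \<le> \<gamma>^2"
  proof -
    have "\<bar>(\<Sum>j<n. m j) / n\<bar> \<le> \<gamma>" using mean_bd[OF x n] unfolding m_def loc_field_mean_def .
    then have "\<bar>(\<Sum>j<n. m j) / n\<bar>^2 \<le> \<gamma>^2" by (intro power_mono) auto
    then show ?thesis by (simp only: power2_abs)
  qed
  have arg0: "4 * K / (\<kappa>^2 * real n) > 0" using K kpos nr by simp
  have r: "0 < r" "r \<le> 1" unfolding r_def using arg0 r1 by auto
  have kapeq: "(1 - tanh M ^ 2) / 2 * (real n * Tp / (2 + 2 * \<gamma>^2)) = \<kappa> * real n"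
    unfolding kap M'[symmetric] Tp_def by (simp add: algebra_simps)
  have big: "sqrt ((Gr1 n m x p0)^2 + (Gr2 n m x p0)^2) < (1 - tanh M ^ 2) / 2 * (real n * Tp / (2 + 2 * \<gamma>^2)) * r"
  proof -
    have "sqrt ((Gr1 n m x p0)^2 + (Gr2 n m x p0)^2) < sqrt (K * real n)"
      using G unfolding Gr1_def Gr2_def m_def p0_def by (intro real_sqrt_less_mono) simp
    also have "\<dots> \<le> sqrt (4 * K * real n)" using K nr by simp
    also have "\<dots> = \<kappa> * real n * r"
    proof -
      have "(\<kappa> * real n * r)^2 = \<kappa>^2 * (real n)^2 * (4 * K / (\<kappa>^2 * real n))"
        unfolding r_def using arg0 by (simp add: power_mult_distrib)
      also have "\<dots> = 4 * K * real n" using kpos nr by (simp add: power2_eq_square field_simps)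
      finally have "(\<kappa> * real n * r)^2 = 4 * K * real n" .
      moreover have "\<kappa> * real n * r \<ge> 0" using kpos nr r by simp
      ultimately show ?thesis by (metis real_sqrt_unique)
    qed
    finally show ?thesis unfolding kapeq .
  qed
  obtain q where q: "Gr1 n m x q = 0" "Gr2 n m x q = 0" "dist q p0 < r"
    using root_exists[OF n _ Tp C2 r M_def big] loc_field_bd[OF x] unfolding m_def by blast
  have uniq: "p = q" if "pl_root A n x p" for p
    using root_unique[OF n Tp C2, of x p q] that q unfolding pl_root_Gr m_def by blast
  have rq: "pl_root A n x q" unfolding pl_root_Gr using q unfolding m_def by simp
  have ex: "ple_exists A n x" unfolding ple_exists_def using rq uniq by blast
  have pq: "ple A n x = q" unfolding ple_def using rq uniq by blast
  have "(fst q - \<beta>)^2 + (snd q - B)^2 = (dist q p0)^2"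
    unfolding p0_def by (cases q) (simp add: dist_Pair_Pair dist_real_def)
  also have "\<dots> < r^2" using q(3) by (intro power_strict_mono) auto
  also have "\<dots> = 4 * K / (\<kappa>^2 * real n)" unfolding r_def using arg0 by simp
  finally show ?thesis using ex pq by simp
qed

end




lemma prob_empty: "configs n \<inter> E = {} \<Longrightarrow> ising_prob A n \<beta> B E = 0"
  unfolding ising_prob_def by simp

lemma PT_lemma:
  fixes A :: matseq
  assumes IS: "\<And>n. ising_n A n \<gamma>" and bpos: "\<beta> > 0"
    and mf: "(\<lambda>n. (\<Sum>i<n. \<Sum>j<n. (A n i j)^2) / real n) \<longlonglongrightarrow> 0"
    and v0: "eventually (\<lambda>n. v0 \<le> (\<Sum>i<n. (row_sum A n i - row_sum_mean A n)^2) / real n) sequentially"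
    and \<delta>0: "\<delta> > 0" and \<eta>0: "\<eta> > 0"
    and K1: "2 * \<gamma>^2 * \<beta>^2 * \<delta> + 2 * \<eta>^2 \<le> (\<bar>tanh B\<bar> / (2 * \<beta>))^2"
    and K2: "4 * (\<delta> * (1 + 3 * \<gamma>^2 * \<beta>^2) + \<eta> + 2 * \<eta>^2) < (\<bar>tanh B\<bar> / (2 * (1 + \<beta> * \<gamma>)))^2 * v0"
    and eps: "\<epsilon> > 0"
  shows "eventually (\<lambda>n. ising_prob A n \<beta> B {x. T_stat A n x \<le> \<delta>} \<le> \<epsilon>) sequentially"
proof -
  define S where "S n = (\<Sum>i<n. \<Sum>j<n. (A n i j)^2)" for n
  define c1 where "c1 = (4 + 2 * \<bar>\<beta>\<bar> * \<gamma>) / \<eta>"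
  define c2 where "c2 = (4 * \<gamma>^2 + 2 * \<bar>\<beta>\<bar> * \<gamma>^3) / \<eta>^2"
  define bnd where "bnd n = c1 * (S n / real n) + c2 * (1 / real n)" for n
  have "bnd \<longlonglongrightarrow> c1 * 0 + c2 * 0"
    unfolding bnd_def S_def by (intro tendsto_intros mf)
  then have "bnd \<longlonglongrightarrow> 0" by simp
  then have ev1: "eventually (\<lambda>n. bnd n < \<epsilon>) sequentially" using eps by (rule order_tendstoD(2))
  have ev2: "eventually (\<lambda>n. n > 0) sequentially" by (rule eventually_gt_at_top)
  show ?thesis
    using ev1 ev2 v0
  proof eventually_elim
    case (elim n)
    interpret I: ising_n A n \<beta> B \<gamma> by (rule IS)
    have n: "n > 0" and nr: "real n > 0" using elim by auto
    define D where "D x = (\<Sum>i<n. (\<Sum>j<n. A n i j * (x j - tanh (\<beta> * loc_field A n x j + B)))^2)" for x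
    define F where "F x = (\<Sum>j<n. row_sum A n j * (x j - tanh (\<beta> * loc_field A n x j + B)))^2" for x
    have sub: "configs n \<inter> {x. T_stat A n x \<le> \<delta>} \<subseteq> {x. \<eta> * real n \<le> D x} \<union> {x. (\<eta> * real n)^2 \<le> F x}"
    proof
      fix x assume x: "x \<in> configs n \<inter> {x. T_stat A n x \<le> \<delta>}"
      show "x \<in> {x. \<eta> * real n \<le> D x} \<union> {x. (\<eta> * real n)^2 \<le> F x}"
      proof (rule ccontr)
        assume "x \<notin> {x. \<eta> * real n \<le> D x} \<union> {x. (\<eta> * real n)^2 \<le> F x}"
        then have "D x \<le> \<eta> * real n" "F x \<le> (\<eta> * real n)^2" by auto
        then show False using I.det_main[OF n _ bpos _ _ _ _ _ _ K1 K2] x elim \<delta>0 \<eta>0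
          unfolding D_def F_def by auto
      qed
    qed
    have "ising_prob A n \<beta> B {x. T_stat A n x \<le> \<delta>} \<le> ising_prob A n \<beta> B ({x. \<eta> * real n \<le> D x} \<union> {x. (\<eta> * real n)^2 \<le> F x})"
      using sub by (rule prob_mono)
    also have "\<dots> \<le> ising_prob A n \<beta> B {x. \<eta> * real n \<le> D x} + ising_prob A n \<beta> B {x. (\<eta> * real n)^2 \<le> F x}"
      by (rule prob_union)
    also have "\<dots> \<le> EE A n \<beta> B D / (\<eta> * real n) + EE A n \<beta> B F / (\<eta> * real n)^2"
      using nr \<eta>0 by (intro add_mono markov) (auto simp: D_def F_def intro!: sum_nonneg)
    also have "\<dots> \<le> (4 + 2 * \<bar>\<beta>\<bar> * \<gamma>) * S n / (\<eta> * real n) + (4 * \<gamma>^2 + 2 * \<bar>\<beta>\<bar> * \<gamma>^3) * real n / (\<eta> * real n)^2"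
      using I.ED I.EF nr \<eta>0 unfolding D_def F_def S_def by (intro add_mono divide_right_mono) auto
    also have "\<dots> = bnd n" unfolding bnd_def c1_def c2_def using nr \<eta>0 by (simp add: field_simps power2_eq_square)
    finally show ?case using elim by simp
  qed
qed


lemma PB:
  fixes A :: matseq
  assumes IS: "\<And>n. ising_n A n \<gamma>" and bpos: "\<beta> > 0" and \<delta>0: "\<delta> > 0"
    and PT: "\<And>\<epsilon>. \<epsilon> > 0 \<Longrightarrow> eventually (\<lambda>n. ising_prob A n \<beta> B {x. T_stat A n x \<le> \<delta>} \<le> \<epsilon>) sequentially"
    and eps: "\<epsilon> > 0"
  shows "\<exists>Mf. eventually (\<lambda>n. ising_prob A n \<beta> B (- {x. ple_exists A n x} \<union>
      {x. ple_exists A n x \<and> (fst (ple A n x) - \<beta>)^2 + (snd (ple A n x) - B)^2 > Mf * (1 / real n)}) \<le> \<epsilon>) sequentially"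
proof -
  have gam: "\<gamma> \<ge> 0" using ising_n.gam[OF IS] .
  define CG where "CG = (4 * \<gamma>^2 + 2 * \<gamma> * (2 + \<bar>\<beta>\<bar> * \<gamma>) * \<gamma>) + (4 + 2 * \<bar>\<beta>\<bar> * \<gamma>)"
  have CG0: "CG \<ge> 0" unfolding CG_def using gam by simp
  define K where "K = 2 * CG / \<epsilon> + 1"
  have K0: "K > 0" unfolding K_def using CG0 eps by (simp add: add_nonneg_pos)
  have CGK: "CG / K \<le> \<epsilon> / 2"
  proof -
    have "CG \<le> \<epsilon> / 2 * K" unfolding K_def using eps by (simp add: field_simps)
    then show ?thesis using K0 by (simp add: divide_le_eq)
  qed
  define \<kappa> where "\<kappa> = (1 - tanh ((\<beta> + 1) * \<gamma> + \<bar>B\<bar> + 1) ^ 2) / 2 * (min \<delta> 1 / (2 + 2 * \<gamma>^2))"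
  have kpos: "\<kappa> > 0"
  proof -
    have "\<bar>tanh ((\<beta> + 1) * \<gamma> + \<bar>B\<bar> + 1)\<bar> < 1" using tanh_real_bounds by (auto simp: abs_less_iff)
    then have "tanh ((\<beta> + 1) * \<gamma> + \<bar>B\<bar> + 1) ^ 2 < 1" by (simp add: abs_square_less_1)
    then show ?thesis unfolding \<kappa>_def using \<delta>0 gam by (intro mult_pos_pos divide_pos_pos) (auto simp: add_pos_nonneg)
  qed
  define Mf where "Mf = 4 * K / \<kappa>^2"
  have "(\<lambda>n. Mf * (1 / real n)) \<longlonglongrightarrow> Mf * 0" by (intro tendsto_intros)
  then have ev1: "eventually (\<lambda>n. Mf * (1 / real n) < 1) sequentially" by (intro order_tendstoD(2)) auto
  have ev2: "eventually (\<lambda>n. n > 0) sequentially" by (rule eventually_gt_at_top)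
  have ev3: "eventually (\<lambda>n. ising_prob A n \<beta> B {x. T_stat A n x \<le> \<delta>} \<le> \<epsilon> / 2) sequentially"
    using PT[of "\<epsilon> / 2"] eps by simp
  have "eventually (\<lambda>n. ising_prob A n \<beta> B (- {x. ple_exists A n x} \<union>
      {x. ple_exists A n x \<and> (fst (ple A n x) - \<beta>)^2 + (snd (ple A n x) - B)^2 > Mf * (1 / real n)}) \<le> \<epsilon>) sequentially"
    using ev1 ev2 ev3
  proof eventually_elim
    case (elim n)
    interpret I: ising_n A n \<beta> B \<gamma> by (rule IS)
    have n: "n > 0" and nr: "real n > 0" using elim by auto
    define G where "G x = (\<Sum>i<n. loc_field A n x i * (x i - tanh (\<beta> * loc_field A n x i + B)))^2
            + (\<Sum>i<n. x i - tanh (\<beta> * loc_field A n x i + B))^2" for x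
    have r1: "4 * K / (\<kappa>^2 * real n) \<le> 1" using elim(1) unfolding Mf_def by simp
    have sub: "configs n \<inter> (- {x. ple_exists A n x} \<union>
      {x. ple_exists A n x \<and> (fst (ple A n x) - \<beta>)^2 + (snd (ple A n x) - B)^2 > Mf * (1 / real n)})
      \<subseteq> {x. T_stat A n x \<le> \<delta>} \<union> {x. K * real n \<le> G x}"
    proof
      fix x assume x: "x \<in> configs n \<inter> (- {x. ple_exists A n x} \<union>
        {x. ple_exists A n x \<and> (fst (ple A n x) - \<beta>)^2 + (snd (ple A n x) - B)^2 > Mf * (1 / real n)})"
      show "x \<in> {x. T_stat A n x \<le> \<delta>} \<union> {x. K * real n \<le> G x}"
      proof (rule ccontr)
        assume "x \<notin> {x. T_stat A n x \<le> \<delta>} \<union> {x. K * real n \<le> G x}"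
        then have T: "T_stat A n x > \<delta>" and Gx: "G x < K * real n" by auto
        have "ple_exists A n x \<and> (fst (ple A n x) - \<beta>)^2 + (snd (ple A n x) - B)^2 < 4 * K / (\<kappa>^2 * real n)"
          using x Gx unfolding G_def by (intro I.ple_good[OF n _ bpos \<delta>0 T K0 _ \<kappa>_def r1]) auto
        moreover have "4 * K / (\<kappa>^2 * real n) = Mf * (1 / real n)" unfolding Mf_def by simp
        ultimately show False using x by auto
      qed
    qed
    have EG: "EE A n \<beta> B G \<le> CG * real n"
    proof -
      have "EE A n \<beta> B G = EE A n \<beta> B (\<lambda>x. (\<Sum>i<n. loc_field A n x i * (x i - tanh (\<beta> * loc_field A n x i + B)))^2)
         + EE A n \<beta> B (\<lambda>x. (\<Sum>i<n. x i - tanh (\<beta> * loc_field A n x i + B))^2)"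
        unfolding G_def using EE_sum[of A n \<beta> B "\<lambda>b x. if b then (\<Sum>i<n. loc_field A n x i * (x i - tanh (\<beta> * loc_field A n x i + B)))^2
            else (\<Sum>i<n. x i - tanh (\<beta> * loc_field A n x i + B))^2" UNIV]
        by (simp add: UNIV_bool add.commute)
      also have "\<dots> \<le> (4 * \<gamma>^2 + 2 * \<gamma> * (2 + \<bar>\<beta>\<bar> * \<gamma>) * \<gamma>) * real n + (4 + 2 * \<bar>\<beta>\<bar> * \<gamma>) * real n"
        by (intro add_mono I.EG1 I.EG2)
      also have "\<dots> = CG * real n" unfolding CG_def by (simp add: algebra_simps)
      finally show ?thesis .
    qed
    have "ising_prob A n \<beta> B (- {x. ple_exists A n x} \<union>
      {x. ple_exists A n x \<and> (fst (ple A n x) - \<beta>)^2 + (snd (ple A n x) - B)^2 > Mf * (1 / real n)})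
      \<le> ising_prob A n \<beta> B ({x. T_stat A n x \<le> \<delta>} \<union> {x. K * real n \<le> G x})"
      using sub by (rule prob_mono)
    also have "\<dots> \<le> ising_prob A n \<beta> B {x. T_stat A n x \<le> \<delta>} + ising_prob A n \<beta> B {x. K * real n \<le> G x}"
      by (rule prob_union)
    also have "\<dots> \<le> \<epsilon> / 2 + EE A n \<beta> B G / (K * real n)"
      using elim(3) nr K0 by (intro add_mono markov) (auto simp: G_def)
    also have "\<epsilon> / 2 + EE A n \<beta> B G / (K * real n) \<le> \<epsilon> / 2 + CG * real n / (K * real n)"
      using EG K0 nr by (intro add_left_mono divide_right_mono) auto
    also have "\<epsilon> / 2 + CG * real n / (K * real n) = \<epsilon> / 2 + CG / K" using nr by simp
    finally have fin: "ising_prob A n \<beta> B (- {x. ple_exists A n x} \<union>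
      {x. ple_exists A n x \<and> (fst (ple A n x) - \<beta>)^2 + (snd (ple A n x) - B)^2 > Mf * (1 / real n)}) \<le> \<epsilon> / 2 + CG / K" .
    show ?case using fin CGK by linarith
  qed
  then show ?thesis by blast
qed




theorem theorem2:
  fixes A :: matseq and \<beta> B :: real
  assumes symm: "\<And>n i j. i < n \<Longrightarrow> j < n \<Longrightarrow> A n i j = A n j i"
    and nonneg: "\<And>n i j. i < n \<Longrightarrow> j < n \<Longrightarrow> A n i j \<ge> 0"
    and diag: "\<And>n i. i < n \<Longrightarrow> A n i i = 0"
    and C1: "\<exists>\<gamma>. \<forall>n i. i < n \<longrightarrow> row_sum A n i \<le> \<gamma>"
    and mean_field: "(\<lambda>n. (\<Sum>i<n. \<Sum>j<n. (A n i j)^2) / real n) \<longlonglongrightarrow> 0"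
    and irregular: "liminf (\<lambda>n. ereal ((\<Sum>i<n. (row_sum A n i - row_sum_mean A n)^2) / real n)) > 0"
    and \<beta>_pos: "\<beta> > 0" and B_nz: "B \<noteq> 0"
  shows "Thetap A \<beta> B (\<lambda>n x. T_stat A n x) (\<lambda>n x. 1)
       \<and> (\<lambda>n. ising_prob A n \<beta> B {x. ple_exists A n x}) \<longlonglongrightarrow> 1
       \<and> (\<forall>\<epsilon>>0. \<exists>M. eventually (\<lambda>n. ising_prob A n \<beta> B
             {x. ple_exists A n x \<and>
                 (fst (ple A n x) - \<beta>)^2 + (snd (ple A n x) - B)^2 > M * (1 / real n)} \<le> \<epsilon>)
           sequentially)"
proof -
  obtain \<gamma>0 where g0: "\<And>n i. i < n \<Longrightarrow> row_sum A n i \<le> \<gamma>0" using C1 by blast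
  define \<gamma> where "\<gamma> = max \<gamma>0 1"
  have gam: "\<gamma> \<ge> 1" unfolding \<gamma>_def by simp
  have IS: "ising_n A n \<gamma>" for n
  proof
    show "\<And>j k. j < n \<Longrightarrow> k < n \<Longrightarrow> A n j k = A n k j" by (rule symm)
    show "\<And>j. j < n \<Longrightarrow> A n j j = 0" by (rule diag)
    show "\<And>j k. j < n \<Longrightarrow> k < n \<Longrightarrow> 0 \<le> A n j k" by (rule nonneg)
    show "\<And>i. i < n \<Longrightarrow> row_sum A n i \<le> \<gamma>" unfolding \<gamma>_def using g0 by (meson max.coboundedI1)
    show "0 \<le> \<gamma>" using gam by simp
  qed
  define Vn where "Vn n = (\<Sum>i<n. (row_sum A n i - row_sum_mean A n)^2) / real n" for n
  obtain v0 where v0pos: "v0 > 0" and v0ev: "eventually (\<lambda>n. v0 \<le> Vn n) sequentially"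
  proof -
    obtain z where z: "0 < ereal z" "ereal z < liminf (\<lambda>n. ereal (Vn n))"
      using ereal_dense2[OF irregular] unfolding Vn_def by blast
    have "eventually (\<lambda>n. ereal (Vn n) > ereal z) sequentially" by (rule less_LiminfD[OF z(2)])
    then have "eventually (\<lambda>n. z \<le> Vn n) sequentially" by (rule eventually_mono) simp
    moreover have "z > 0" using z(1) by simp
    ultimately show ?thesis using that by blast
  qed
  define \<tau> where "\<tau> = \<bar>tanh B\<bar>"
  have \<tau>0: "\<tau> > 0" unfolding \<tau>_def using B_nz by simp
  define a where "a = (\<tau> / (2 * \<beta>))^2"
  define b where "b = (\<tau> / (2 * (1 + \<beta> * \<gamma>)))^2 * v0"
  have a0: "a > 0" unfolding a_def using \<tau>0 \<beta>_pos by simp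
  have b0: "b > 0"
  proof -
    have "1 + \<beta> * \<gamma> > 0" using \<beta>_pos gam by (simp add: add_pos_nonneg)
    then have "\<tau> / (2 * (1 + \<beta> * \<gamma>)) > 0" using \<tau>0 by simp
    then have "(\<tau> / (2 * (1 + \<beta> * \<gamma>)))^2 > 0" by (rule zero_less_power)
    then show ?thesis unfolding b_def using v0pos by (rule mult_pos_pos)
  qed
  define g where "g = \<gamma>^2 * \<beta>^2"
  have g0': "g \<ge> 0" unfolding g_def by simp
  define \<delta> where "\<delta> = min (a / (4 * (g + 1))) (b / (16 * (1 + 3 * g)))"
  define \<eta> where "\<eta> = min 1 (min (a / 4) (b / 48))"
  have \<delta>0: "\<delta> > 0" unfolding \<delta>_def using a0 b0 g0' by simp
  have \<eta>0: "\<eta> > 0" unfolding \<eta>_def using a0 b0 by simp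
  have \<eta>1: "\<eta> \<le> 1" "\<eta> \<le> a / 4" "\<eta> \<le> b / 48" unfolding \<eta>_def by auto
  have \<eta>sq: "\<eta>^2 \<le> \<eta>" using \<eta>0 \<eta>1(1) by (simp add: power2_eq_square mult_left_le_one_le)
  have \<delta>1: "\<delta> * (4 * (g + 1)) \<le> a" "\<delta> * (16 * (1 + 3 * g)) \<le> b"
  proof -
    have "\<delta> \<le> a / (4 * (g + 1))" unfolding \<delta>_def by simp
    then show "\<delta> * (4 * (g + 1)) \<le> a" using g0' by (simp add: le_divide_eq)
    have "\<delta> \<le> b / (16 * (1 + 3 * g))" unfolding \<delta>_def by simp
    then show "\<delta> * (16 * (1 + 3 * g)) \<le> b" using g0' by (simp add: le_divide_eq)
  qed
  have K1: "2 * \<gamma>^2 * \<beta>^2 * \<delta> + 2 * \<eta>^2 \<le> (\<bar>tanh B\<bar> / (2 * \<beta>))^2"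
  proof -
    have "2 * g * \<delta> \<le> a / 2" using \<delta>1(1) \<delta>0 g0' by (simp add: algebra_simps)
    moreover have "2 * \<eta>^2 \<le> a / 2" using \<eta>sq \<eta>1 by linarith
    moreover have "2 * \<gamma>^2 * \<beta>^2 * \<delta> = 2 * g * \<delta>" unfolding g_def by simp
    ultimately show ?thesis unfolding a_def \<tau>_def by linarith
  qed
  have K2: "4 * (\<delta> * (1 + 3 * \<gamma>^2 * \<beta>^2) + \<eta> + 2 * \<eta>^2) < (\<bar>tanh B\<bar> / (2 * (1 + \<beta> * \<gamma>)))^2 * v0"
  proof -
    have e: "4 * (\<delta> * (1 + 3 * \<gamma>^2 * \<beta>^2) + \<eta> + 2 * \<eta>^2) = \<delta> * (16 * (1 + 3 * g)) / 4 + 4 * \<eta> + 8 * \<eta>^2"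
      unfolding g_def by (simp add: algebra_simps)
    have "\<delta> * (16 * (1 + 3 * g)) / 4 \<le> b / 4" using \<delta>1(2) by simp
    moreover have "4 * \<eta> + 8 * \<eta>^2 \<le> b / 4" using \<eta>sq \<eta>1 by linarith
    ultimately have "4 * (\<delta> * (1 + 3 * \<gamma>^2 * \<beta>^2) + \<eta> + 2 * \<eta>^2) \<le> b / 2" unfolding e by linarith
    then show ?thesis using b0 unfolding b_def \<tau>_def by linarith
  qed
  have PT: "eventually (\<lambda>n. ising_prob A n \<beta> B {x. T_stat A n x \<le> \<delta>} \<le> \<epsilon>) sequentially" if "\<epsilon> > 0" for \<epsilon>
    by (rule PT_lemma[OF IS \<beta>_pos mean_field _ \<delta>0 \<eta>0 K1 K2 that]) (use v0ev in \<open>simp add: Vn_def\<close>)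
  have PBm: "\<exists>Mf. eventually (\<lambda>n. ising_prob A n \<beta> B (- {x. ple_exists A n x} \<union>
      {x. ple_exists A n x \<and> (fst (ple A n x) - \<beta>)^2 + (snd (ple A n x) - B)^2 > Mf * (1 / real n)}) \<le> \<epsilon>) sequentially"
    if "\<epsilon> > 0" for \<epsilon>
    by (rule PB[OF IS \<beta>_pos \<delta>0 PT that])
  have part1: "Thetap A \<beta> B (\<lambda>n x. T_stat A n x) (\<lambda>n x. 1)"
    unfolding Thetap_def Op_def
  proof (intro conjI allI impI)
    fix \<epsilon> :: real assume eps: "\<epsilon> > 0"
    have "eventually (\<lambda>n. ising_prob A n \<beta> B {x. \<bar>T_stat A n x\<bar> > 4 * \<gamma>^2 * \<bar>1\<bar>} \<le> \<epsilon>) sequentially"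
      using eventually_gt_at_top[of 0]
    proof eventually_elim
      case (elim n)
      interpret I: ising_n A n \<beta> B \<gamma> by (rule IS)
      have "configs n \<inter> {x. \<bar>T_stat A n x\<bar> > 4 * \<gamma>^2 * \<bar>1\<bar>} = {}"
        using I.T_le[OF _ elim] I.T_nonneg by fastforce
      then show ?case using eps by (simp add: prob_empty)
    qed
    then show "\<exists>M. eventually (\<lambda>n. ising_prob A n \<beta> B {x. \<bar>T_stat A n x\<bar> > M * \<bar>1\<bar>} \<le> \<epsilon>) sequentially"
      by blast
  next
    fix \<epsilon> :: real assume eps: "\<epsilon> > 0"
    have "eventually (\<lambda>n. ising_prob A n \<beta> B {x. \<bar>1::real\<bar> > (1 / \<delta>) * \<bar>T_stat A n x\<bar>} \<le> \<epsilon>) sequentially"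
      using PT[OF eps]
    proof eventually_elim
      case (elim n)
      have "ising_prob A n \<beta> B {x. \<bar>1::real\<bar> > (1 / \<delta>) * \<bar>T_stat A n x\<bar>} \<le> ising_prob A n \<beta> B {x. T_stat A n x \<le> \<delta>}"
      proof (rule prob_mono, safe)
        fix x assume "\<bar>1::real\<bar> > (1 / \<delta>) * \<bar>T_stat A n x\<bar>"
        then have "\<bar>T_stat A n x\<bar> < \<delta>" using \<delta>0 by (simp add: field_simps)
        then show "T_stat A n x \<le> \<delta>" by simp
      qed
      then show ?case using elim by simp
    qed
    then show "\<exists>M. eventually (\<lambda>n. ising_prob A n \<beta> B {x. \<bar>1::real\<bar> > M * \<bar>T_stat A n x\<bar>} \<le> \<epsilon>) sequentially"
      by blast
  qed
  have part2: "(\<lambda>n. ising_prob A n \<beta> B {x. ple_exists A n x}) \<longlonglongrightarrow> 1"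
  proof (rule order_tendstoI)
    fix c :: real assume c: "c < 1"
    obtain Mf where ev: "eventually (\<lambda>n. ising_prob A n \<beta> B (- {x. ple_exists A n x} \<union>
      {x. ple_exists A n x \<and> (fst (ple A n x) - \<beta>)^2 + (snd (ple A n x) - B)^2 > Mf * (1 / real n)}) \<le> (1 - c) / 2) sequentially"
      using PBm[of "(1 - c) / 2"] c by auto
    show "eventually (\<lambda>n. c < ising_prob A n \<beta> B {x. ple_exists A n x}) sequentially"
      using ev
    proof eventually_elim
      case (elim n)
      have "ising_prob A n \<beta> B (- {x. ple_exists A n x}) \<le> ising_prob A n \<beta> B (- {x. ple_exists A n x} \<union>
        {x. ple_exists A n x \<and> (fst (ple A n x) - \<beta>)^2 + (snd (ple A n x) - B)^2 > Mf * (1 / real n)})"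
        by (rule prob_mono) auto
      moreover have "(1 - c) / 2 < 1 - c" using c by simp
      ultimately show ?case using elim prob_compl[of A n \<beta> B "{x. ple_exists A n x}"] by linarith
    qed
  next
    fix c :: real assume "1 < c"
    then show "eventually (\<lambda>n. ising_prob A n \<beta> B {x. ple_exists A n x} < c) sequentially"
      using prob_le1 by (intro always_eventually) (metis le_less_trans)
  qed
  have part3: "\<forall>\<epsilon>>0. \<exists>M. eventually (\<lambda>n. ising_prob A n \<beta> B
             {x. ple_exists A n x \<and>
                 (fst (ple A n x) - \<beta>)^2 + (snd (ple A n x) - B)^2 > M * (1 / real n)} \<le> \<epsilon>)
           sequentially"
  proof (intro allI impI)
    fix \<epsilon> :: real assume eps: "\<epsilon> > 0"
    obtain Mf where ev: "eventually (\<lambda>n. ising_prob A n \<beta> B (- {x. ple_exists A n x} \<union>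
      {x. ple_exists A n x \<and> (fst (ple A n x) - \<beta>)^2 + (snd (ple A n x) - B)^2 > Mf * (1 / real n)}) \<le> \<epsilon>) sequentially"
      using PBm[OF eps] by auto
    have "eventually (\<lambda>n. ising_prob A n \<beta> B
             {x. ple_exists A n x \<and>
                 (fst (ple A n x) - \<beta>)^2 + (snd (ple A n x) - B)^2 > Mf * (1 / real n)} \<le> \<epsilon>) sequentially"
      using ev
    proof eventually_elim
      case (elim n)
      have "ising_prob A n \<beta> B {x. ple_exists A n x \<and> (fst (ple A n x) - \<beta>)^2 + (snd (ple A n x) - B)^2 > Mf * (1 / real n)}
        \<le> ising_prob A n \<beta> B (- {x. ple_exists A n x} \<union>
        {x. ple_exists A n x \<and> (fst (ple A n x) - \<beta>)^2 + (snd (ple A n x) - B)^2 > Mf * (1 / real n)})"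
        by (rule prob_mono) auto
      then show ?case using elim by linarith
    qed
    then show "\<exists>M. eventually (\<lambda>n. ising_prob A n \<beta> B
             {x. ple_exists A n x \<and>
                 (fst (ple A n x) - \<beta>)^2 + (snd (ple A n x) - B)^2 > M * (1 / real n)} \<le> \<epsilon>) sequentially"
      by blast
  qed
  show ?thesis using part1 part2 part3 by blast
qed


end
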